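(* Let $G=GL(\infty,F_2)\ltimes F_2^\infty$. For $g\in GL(\infty,F_2)$ let $f_g=\frac{1}{\#R(g-I)}\sum_{v\in R(g-I)}u_v\in L(F_2^\infty)$, where $R(g-I)$ is the (finite) range of $g-I$. Let $\mathcal M_{exo}$ be the von Neumann subalgebra of $L(G)$ generated by $L(F_2^\infty)$ together with the elements $u_gf_g$, $g\in GL(\infty,F_2)$. Then $\mathcal M_{exo}$ is a $G$-invariant von Neumann subalgebra of $L(G)$ which is not of the form $L(N)$ for any normal subgroup $N\trianglelefteq G$.
   Context: For a countable discrete group $G$, $L(G)$ is the group von Neumann algebra generated by the left regular unitaries $u_g$ on $\ell^2(G)$; for a subgroup $N$, $L(N)$ is the von Neumann subalgebra generated by $\{u_g:g\in N\}$. A von Neumann subalgebra $\mathcal M\subseteq L(G)$ is $G$-invariant if $u_g\mathcal M u_g^*\subseteq\mathcal M$ for all $g\in G$. $F_2$ is the field with two elements and $F_2^\infty=\bigoplus_{\mathbb N}F_2$ is the space of finitely supported column vectors, regarded as an abelian group under addition. $GL(\infty,F_2)$ is the group of invertible $\mathbb N\times\mathbb N$ matrices $M$ over $F_2$ with $M_{ij}\neq\delta_{ij}$ for only finitely many $(i,j)$, acting on $F_2^\infty$ by matrix multiplication; $I$ is the identity matrix. $G=GL(\infty,F_2)\ltimes F_2^\infty$ is the semidirect product with $gvg^{-1}=g(v)$. *)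

theory Defs
  imports "HOL-Analysis.Analysis" "HOL-Library.Z2" "HOL-Algebra.Coset"
begin

type_synonym vec2 = "nat \<Rightarrow> bit"
type_synonym mat2 = "nat \<Rightarrow> nat \<Rightarrow> bit"

definition fsupp :: "vec2 \<Rightarrow> bool" where
  "fsupp v \<longleftrightarrow> finite {i. v i \<noteq> 0}"

definition idm :: mat2 where
  "idm = (\<lambda>i j. if i = j then 1 else 0)"

definition finitary :: "mat2 \<Rightarrow> bool" where
  "finitary M \<longleftrightarrow> finite {(i, j). M i j \<noteq> idm i j}"

text \<open>Matrix times vector and matrix product (the sums are over finite sets
  for finitely supported vectors / finitary matrices).\<close>
definition mv :: "mat2 \<Rightarrow> vec2 \<Rightarrow> vec2" where
  "mv M v = (\<lambda>i. \<Sum>j\<in>{j. v j \<noteq> 0}. M i j * v j)"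

definition mm :: "mat2 \<Rightarrow> mat2 \<Rightarrow> mat2" where
  "mm A B = (\<lambda>i k. \<Sum>j\<in>{j. A i j \<noteq> 0}. A i j * B j k)"

definition GLinf :: "mat2 set" where
  "GLinf = {M. finitary M \<and> (\<exists>B. finitary B \<and> mm M B = idm \<and> mm B M = idm)}"

definition minv :: "mat2 \<Rightarrow> mat2" where
  "minv M = (SOME B. finitary B \<and> mm M B = idm \<and> mm B M = idm)"

text \<open>A pair (g, v) stands for the group element v g (v in F_2^infinity, g in GL),
  so that (v g)(w h) = (v + g(w)) (g h), matching g w g^{-1} = g(w).\<close>

typedef grp = "{p :: mat2 \<times> vec2. fst p \<in> GLinf \<and> fsupp (snd p)}"
proof
  have "mm idm idm = idm"
  proof -
    have "\<And>i k. (\<Sum>j\<in>{j. idm i j \<noteq> 0}. idm i j * idm j k) = idm i k"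
    proof -
      fix i k
      have "{j. idm i j \<noteq> 0} = {i}" by (auto simp: idm_def)
      then show "(\<Sum>j\<in>{j. idm i j \<noteq> 0}. idm i j * idm j k) = idm i k"
        by (simp add: idm_def)
    qed
    then show ?thesis unfolding mm_def by blast
  qed
  moreover have "finitary idm" by (simp add: finitary_def)
  ultimately show "(idm, (\<lambda>_. 0)) \<in> {p :: mat2 \<times> vec2. fst p \<in> GLinf \<and> fsupp (snd p)}"
    by (auto simp: GLinf_def fsupp_def)
qed

definition gmul :: "grp \<Rightarrow> grp \<Rightarrow> grp" where
  "gmul x y = (case Rep_grp x of (g, v) \<Rightarrow> case Rep_grp y of (h, w) \<Rightarrow>
      Abs_grp (mm g h, (\<lambda>i. v i + mv g w i)))"

definition gone :: grp where
  "gone = Abs_grp (idm, (\<lambda>_. 0))"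

definition ginv :: "grp \<Rightarrow> grp" where
  "ginv x = (case Rep_grp x of (g, v) \<Rightarrow> Abs_grp (minv g, (\<lambda>i. - mv (minv g) v i)))"

definition Ggrp :: "grp monoid" where
  "Ggrp = \<lparr>carrier = UNIV, mult = gmul, one = gone\<rparr>"

definition vecG :: "vec2 \<Rightarrow> grp" where
  "vecG v = Abs_grp (idm, v)"

definition matG :: "mat2 \<Rightarrow> grp" where
  "matG g = Abs_grp (g, (\<lambda>_. 0))"

definition Vsub :: "grp set" where
  "Vsub = vecG ` {v. fsupp v}"

type_synonym vect = "grp \<Rightarrow> complex"
type_synonym oper = "vect \<Rightarrow> vect"

definition l2 :: "vect set" where
  "l2 = {\<xi>. (\<lambda>x. (cmod (\<xi> x))\<^sup>2) summable_on UNIV}"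

definition linner :: "vect \<Rightarrow> vect \<Rightarrow> complex" where
  "linner \<xi> \<eta> = infsum (\<lambda>x. cnj (\<xi> x) * \<eta> x) UNIV"

definition lnorm :: "vect \<Rightarrow> real" where
  "lnorm \<xi> = sqrt (infsum (\<lambda>x. (cmod (\<xi> x))\<^sup>2) UNIV)"

text \<open>Bounded linear operators on l^2(G); as a normalisation, operators are
  required to vanish outside l^2(G), so that equality of operators is equality
  of functions.\<close>
definition bop :: "oper \<Rightarrow> bool" where
  "bop T \<longleftrightarrow> (\<forall>\<xi>\<in>l2. T \<xi> \<in> l2)
     \<and> (\<forall>\<xi>\<in>l2. \<forall>\<eta>\<in>l2. \<forall>a b::complex.
          T (\<lambda>x. a * \<xi> x + b * \<eta> x) = (\<lambda>x. a * T \<xi> x + b * T \<eta> x))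
     \<and> (\<exists>C. \<forall>\<xi>\<in>l2. lnorm (T \<xi>) \<le> C * lnorm \<xi>)
     \<and> (\<forall>\<xi>. \<xi> \<notin> l2 \<longrightarrow> T \<xi> = (\<lambda>_. 0))"

definition adj :: "oper \<Rightarrow> oper" where
  "adj T = (THE S. bop S \<and> (\<forall>\<xi>\<in>l2. \<forall>\<eta>\<in>l2. linner (T \<xi>) \<eta> = linner \<xi> (S \<eta>)))"

definition comm :: "oper set \<Rightarrow> oper set" where
  "comm S = {T. bop T \<and> (\<forall>A\<in>S. T \<circ> A = A \<circ> T)}"

text \<open>The von Neumann algebra generated by a set S of bounded operators:
  by the bicommutant theorem, the double commutant of S together with its adjoints.\<close>
definition vNgen :: "oper set \<Rightarrow> oper set" where
  "vNgen S = comm (comm (S \<union> adj ` S))"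

definition is_vNa :: "oper set \<Rightarrow> bool" where
  "is_vNa M \<longleftrightarrow> M \<subseteq> Collect bop \<and> (\<forall>T\<in>M. adj T \<in> M) \<and> comm (comm M) = M"

definition uop :: "grp \<Rightarrow> oper" where
  "uop g \<xi> = (if \<xi> \<in> l2 then (\<lambda>h. \<xi> (gmul (ginv g) h)) else (\<lambda>_. 0))"

definition LG :: "grp set \<Rightarrow> oper set" where
  "LG N = vNgen (uop ` N)"

definition G_invariant :: "oper set \<Rightarrow> bool" where
  "G_invariant M \<longleftrightarrow> (\<forall>g. \<forall>T\<in>M. uop g \<circ> T \<circ> adj (uop g) \<in> M)"

definition Rng :: "mat2 \<Rightarrow> vec2 set" where
  "Rng g = {w. \<exists>v. fsupp v \<and> w = (\<lambda>i. mv g v i - v i)}"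

definition fop :: "mat2 \<Rightarrow> oper" where
  "fop g \<xi> = (\<lambda>h. (1 / of_nat (card (Rng g))) * (\<Sum>v\<in>Rng g. uop (vecG v) \<xi> h))"

definition Mexo :: "oper set" where
  "Mexo = vNgen (LG Vsub \<union> {uop (matG g) \<circ> fop g | g. g \<in> GLinf})"

end

theory Submission
  imports Defs
begin

declare add_bit_eq_xor[simp del] mult_bit_eq_and[simp del]


lemma l2_iff: "\<xi> \<in> l2 \<longleftrightarrow> (\<lambda>x. (cmod (\<xi> x))\<^sup>2) summable_on UNIV"
  by (simp add: l2_def)

lemma l2_zero[simp]: "(\<lambda>_. 0) \<in> l2"
  by (simp add: l2_def)

lemma l2_mono:
  assumes "\<eta> \<in> l2" "\<And>x. cmod (\<xi> x) \<le> cmod (\<eta> x)"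
  shows "\<xi> \<in> l2"
  unfolding l2_iff
  by (rule summable_on_comparison_test[OF assms(1)[unfolded l2_iff]])
     (auto intro: power_mono assms(2))

lemma l2_scale: "\<xi> \<in> l2 \<Longrightarrow> (\<lambda>x. c * \<xi> x) \<in> l2"
  unfolding l2_iff by (simp add: norm_mult power_mult_distrib summable_on_cmult_right)

lemma sq2_le: "((x::real) + y)\<^sup>2 \<le> 2 * x\<^sup>2 + 2 * y\<^sup>2"
proof -
  have "(x+y)\<^sup>2 = x\<^sup>2 + 2*x*y + y\<^sup>2" "(x-y)\<^sup>2 = x\<^sup>2 - 2*x*y + y\<^sup>2"
    by (simp_all add: power2_eq_square algebra_simps)
  moreover have "(x-y)\<^sup>2 \<ge> 0" by simp
  ultimately show ?thesis by linarith
qed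

lemma sq_add_le: "(cmod (a + b))\<^sup>2 \<le> 2 * (cmod a)\<^sup>2 + 2 * (cmod b)\<^sup>2"
proof -
  have "cmod (a+b) \<le> cmod a + cmod b" by (rule norm_triangle_ineq)
  hence "(cmod (a+b))\<^sup>2 \<le> (cmod a + cmod b)\<^sup>2" by (simp add: power_mono)
  also have "\<dots> \<le> 2 * (cmod a)\<^sup>2 + 2 * (cmod b)\<^sup>2"
    using sq2_le by blast
  finally show ?thesis .
qed

lemma l2_add: "\<xi> \<in> l2 \<Longrightarrow> \<eta> \<in> l2 \<Longrightarrow> (\<lambda>x. \<xi> x + \<eta> x) \<in> l2"
  unfolding l2_iff
  apply (rule summable_on_comparison_test[where f="\<lambda>x. 2 * (cmod (\<xi> x))\<^sup>2 + 2 * (cmod (\<eta> x))\<^sup>2"])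
  by (auto intro!: summable_on_add summable_on_cmult_right sq_add_le)

lemma l2_lin: "\<xi> \<in> l2 \<Longrightarrow> \<eta> \<in> l2 \<Longrightarrow> (\<lambda>x. a * \<xi> x + b * \<eta> x) \<in> l2"
  by (intro l2_add l2_scale)

lemma l2_sum: "finite F \<Longrightarrow> (\<And>i. i \<in> F \<Longrightarrow> f i \<in> l2) \<Longrightarrow> (\<lambda>x. \<Sum>i\<in>F. f i x) \<in> l2"
  by (induction F rule: finite_induct) (auto intro!: l2_add)

lemma l2_finsupp: "finite {x. \<xi> x \<noteq> 0} \<Longrightarrow> \<xi> \<in> l2"
proof -
  assume f: "finite {x. \<xi> x \<noteq> 0}"
  have "(\<lambda>x. (cmod (\<xi> x))\<^sup>2) summable_on {x. \<xi> x \<noteq> 0}" using f by simp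
  then show ?thesis unfolding l2_iff
    by (rule summable_on_cong_neutral[THEN iffD1, rotated -1]) auto
qed


definition nrm2 :: "vect \<Rightarrow> real" where
  "nrm2 \<xi> = infsum (\<lambda>x. (cmod (\<xi> x))\<^sup>2) UNIV"

lemma nrm2_nonneg: "nrm2 \<xi> \<ge> 0"
  unfolding nrm2_def by (rule infsum_nonneg) simp

lemma lnorm_nrm2: "lnorm \<xi> = sqrt (nrm2 \<xi>)"
  by (simp add: lnorm_def nrm2_def)

lemma lnorm_nonneg: "lnorm \<xi> \<ge> 0"
  by (simp add: lnorm_nrm2 nrm2_nonneg)

lemma lnorm_sq: "(lnorm \<xi>)\<^sup>2 = nrm2 \<xi>"
  by (simp add: lnorm_nrm2 nrm2_nonneg)

lemma prod_le_sq: "a \<ge> 0 \<Longrightarrow> b \<ge> 0 \<Longrightarrow> t > 0 \<Longrightarrow> (a::real) * b \<le> (t * a\<^sup>2 + b\<^sup>2 / t) / 2"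
proof -
  assume t: "t > 0"
  have "0 \<le> (t*a - b)\<^sup>2" by simp
  hence "2 * t * a * b \<le> t\<^sup>2 * a\<^sup>2 + b\<^sup>2" by (simp add: power2_eq_square algebra_simps)
  hence "2 * t * (a * b) \<le> t * (t * a\<^sup>2 + b\<^sup>2 / t)" using t
    by (simp add: power2_eq_square algebra_simps)
  hence "2 * (a * b) \<le> t * a\<^sup>2 + b\<^sup>2 / t" using t by simp
  thus ?thesis by simp
qed

lemma aux_div1: "(a::real) > 0 \<Longrightarrow> b / a * (a * a) = a * b"
  by (simp add: field_simps)

lemma amgm_bound:
  fixes X A B :: real
  assumes "\<And>t. t > 0 \<Longrightarrow> X \<le> (t * A + B / t) / 2" "A \<ge> 0" "B \<ge> 0"
  shows "X \<le> sqrt A * sqrt B"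
proof (cases "A > 0 \<and> B > 0")
  case True
  define t where "t = sqrt B / sqrt A"
  have tp: "t > 0" using True by (simp add: t_def)
  have sA: "sqrt A * sqrt A = A" "sqrt B * sqrt B = B" using assms by auto
  have pA: "sqrt A > 0" "sqrt B > 0" using True by auto
  have "t * A = sqrt B / sqrt A * (sqrt A * sqrt A)" unfolding t_def using sA by simp
  also have "\<dots> = sqrt A * sqrt B" by (rule aux_div1[OF pA(1)])
  finally have e1: "t * A = sqrt A * sqrt B" .
  have "B / t = (sqrt B * sqrt B) / (sqrt B / sqrt A)" unfolding t_def using sA by simp
  also have "\<dots> = sqrt A * sqrt B" using pA by (simp add: field_simps)
  finally have e2: "B / t = sqrt A * sqrt B" .
  note e1 moreover note e2
  ultimately show ?thesis using assms(1)[OF tp] by simp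
next
  case False
  hence "A = 0 \<or> B = 0" using assms(2,3) by auto
  then show ?thesis
  proof
    assume A: "A = 0"
    show ?thesis
    proof (rule ccontr)
      assume "\<not> ?thesis"
      hence X: "X > 0" using A by simp
      define t where "t = (B + 1) / X"
      have tp: "t > 0" using X assms(2,3) by (simp add: t_def)
      have "X \<le> B / t / 2" using assms(1)[OF tp] A by simp
      also have "\<dots> = B * X / (2 * (B + 1))" using X assms(2,3) by (simp add: t_def field_simps)
      also have "\<dots> < X"
      proof -
        have "B * X \<ge> 0" using X assms(2,3) by simp
        hence "0 < B * X + X * 2" using X by linarith
        thus ?thesis using X assms(2,3) by (simp add: field_simps)
      qed
      finally show False by simp
    qed
  next
    assume B: "B = 0"
    show ?thesis
    proof (rule ccontr)
      assume "\<not> ?thesis"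
      hence X: "X > 0" using B by simp
      define t where "t = X / (A + 1)"
      have tp: "t > 0" using X assms(2,3) by (simp add: t_def)
      have "X \<le> t * A / 2" using assms(1)[OF tp] B by simp
      also have "\<dots> = X * A / (2 * (A + 1))" using X assms(2,3) by (simp add: t_def field_simps)
      also have "\<dots> < X"
      proof -
        have "A * X \<ge> 0" using X assms(2,3) by simp
        hence "0 < A * X + X * 2" "0 < X * A + X * 2" using X by (auto simp: mult.commute)
        thus ?thesis using X assms(2,3) by (simp add: field_simps)
      qed
      finally show False by simp
    qed
  qed
qed

lemma l2_sq_summable: "\<xi> \<in> l2 \<Longrightarrow> (\<lambda>x. (cmod (\<xi> x))\<^sup>2) summable_on UNIV"
  by (simp add: l2_iff)

lemma prod_le_half: "(a::real) * b * 2 \<le> a\<^sup>2 + b\<^sup>2"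
proof -
  have "0 \<le> (a - b)\<^sup>2" by simp
  thus ?thesis by (simp add: power2_eq_square algebra_simps)
qed

lemma prod_abs_summable:
  assumes "\<xi> \<in> l2" "\<eta> \<in> l2"
  shows "(\<lambda>x. cmod (\<xi> x) * cmod (\<eta> x)) summable_on UNIV"
proof -
  have s: "(\<lambda>x. (1/2) * ((cmod (\<xi> x))\<^sup>2 + (cmod (\<eta> x))\<^sup>2)) summable_on UNIV"
    by (rule summable_on_cmult_right, rule summable_on_add)
       (use assms in \<open>simp_all add: l2_iff\<close>)
  show ?thesis
    by (rule summable_on_comparison_test[OF s]) (simp_all add: prod_le_half)
qed

lemma inner_abs_summable:
  assumes "\<xi> \<in> l2" "\<eta> \<in> l2"
  shows "(\<lambda>x. norm (cnj (\<xi> x) * \<eta> x)) summable_on UNIV"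
  using prod_abs_summable[OF assms] by (simp add: norm_mult)

lemma inner_summable:
  assumes "\<xi> \<in> l2" "\<eta> \<in> l2"
  shows "(\<lambda>x. cnj (\<xi> x) * \<eta> x) summable_on UNIV"
  by (rule abs_summable_summable[OF inner_abs_summable[OF assms]])

lemma infsum_combo:
  assumes "F summable_on UNIV" "G summable_on UNIV" "t > 0"
  shows "infsum (\<lambda>x. (t * F x + G x / t) / 2) UNIV = (t * infsum F UNIV + infsum G UNIV / t) / (2::real)"
proof -
  have eq: "\<And>x. (t * F x + G x / t) / 2 = (t/2) * F x + (1/(2*t)) * G x" using assms(3)
    by (simp add: field_simps)
  have "infsum (\<lambda>x. (t * F x + G x / t) / 2) UNIV = infsum (\<lambda>x. (t/2) * F x + (1/(2*t)) * G x) UNIV"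
    by (simp only: eq)
  also have "\<dots> = infsum (\<lambda>x. (t/2) * F x) UNIV + infsum (\<lambda>x. (1/(2*t)) * G x) UNIV"
    by (rule infsum_add; rule summable_on_cmult_right; rule assms)
  also have "\<dots> = (t/2) * infsum F UNIV + (1/(2*t)) * infsum G UNIV"
    by (simp only: infsum_cmult_right[OF assms(1)] infsum_cmult_right[OF assms(2)])
  also have "\<dots> = (t * infsum F UNIV + infsum G UNIV / t) / 2" using assms(3)
    by (simp add: field_simps)
  finally show ?thesis .
qed

lemma summable_combo:
  assumes "F summable_on UNIV" "G summable_on UNIV"
  shows "(\<lambda>x. (t * F x + G x / t) / (2::real)) summable_on UNIV"
proof -
  have eq: "\<And>x. (t * F x + G x / t) / 2 = (t/2) * F x + (1/(2*t)) * G x"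
    by (simp add: field_simps)
  show ?thesis unfolding eq
    by (rule summable_on_add; rule summable_on_cmult_right; rule assms)
qed

lemma prod_sum_le:
  assumes "\<xi> \<in> l2" "\<eta> \<in> l2"
  shows "infsum (\<lambda>x. cmod (\<xi> x) * cmod (\<eta> x)) UNIV \<le> lnorm \<xi> * lnorm \<eta>"
  unfolding lnorm_nrm2
proof (rule amgm_bound)
  fix t :: real assume t: "t > 0"
  have sx: "(\<lambda>x. (cmod (\<xi> x))\<^sup>2) summable_on UNIV" and sy: "(\<lambda>x. (cmod (\<eta> x))\<^sup>2) summable_on UNIV"
    using assms by (simp_all add: l2_iff)
  have "infsum (\<lambda>x. cmod (\<xi> x) * cmod (\<eta> x)) UNIV \<le>
        infsum (\<lambda>x. (t * (cmod (\<xi> x))\<^sup>2 + (cmod (\<eta> x))\<^sup>2 / t) / 2) UNIV"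
    by (rule infsum_mono[OF prod_abs_summable[OF assms] summable_combo[OF sx sy]])
       (rule prod_le_sq[OF norm_ge_zero norm_ge_zero t])
  also have "\<dots> = (t * nrm2 \<xi> + nrm2 \<eta> / t) / 2"
    unfolding nrm2_def by (rule infsum_combo[OF sx sy t])
  finally show "infsum (\<lambda>x. cmod (\<xi> x) * cmod (\<eta> x)) UNIV \<le> (t * nrm2 \<xi> + nrm2 \<eta> / t) / 2" .
qed (auto simp: nrm2_nonneg)

lemma cauchy_schwarz:
  assumes "\<xi> \<in> l2" "\<eta> \<in> l2"
  shows "cmod (linner \<xi> \<eta>) \<le> lnorm \<xi> * lnorm \<eta>"
proof -
  have "cmod (linner \<xi> \<eta>) \<le> infsum (\<lambda>x. cmod (cnj (\<xi> x) * \<eta> x)) UNIV"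
    unfolding linner_def by (rule norm_infsum_bound[OF inner_abs_summable[OF assms]])
  also have "\<dots> = infsum (\<lambda>x. cmod (\<xi> x) * cmod (\<eta> x)) UNIV" by (simp add: norm_mult)
  also have "\<dots> \<le> lnorm \<xi> * lnorm \<eta>" by (rule prod_sum_le[OF assms])
  finally show ?thesis .
qed

lemma linner_cnj: "linner \<eta> \<xi> = cnj (linner \<xi> \<eta>)"
  unfolding linner_def infsum_cnj[symmetric] by (simp add: mult.commute)

lemma linner_self: "\<xi> \<in> l2 \<Longrightarrow> linner \<xi> \<xi> = of_real (nrm2 \<xi>)"
proof -
  assume l: "\<xi> \<in> l2"
  have "linner \<xi> \<xi> = infsum (\<lambda>x. of_real ((cmod (\<xi> x))\<^sup>2)) UNIV"
    unfolding linner_def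
  proof (rule infsum_cong)
    fix x show "cnj (\<xi> x) * \<xi> x = complex_of_real ((cmod (\<xi> x))\<^sup>2)"
      using complex_norm_square[of "\<xi> x"] by (simp add: mult.commute)
  qed
  also have "\<dots> = of_real (nrm2 \<xi>)"
  proof (rule infsumI)
    show "((\<lambda>x. complex_of_real ((cmod (\<xi> x))\<^sup>2)) has_sum complex_of_real (nrm2 \<xi>)) UNIV"
      unfolding nrm2_def
      using has_sum_of_real[where 'a=complex, OF has_sum_infsum[OF l2_sq_summable[OF l]]] by simp
  qed
  finally show ?thesis .
qed


definition delta :: "grp \<Rightarrow> vect" where
  "delta a = (\<lambda>y. if y = a then 1 else 0)"

lemma delta_l2[simp]: "delta a \<in> l2"
  by (rule l2_finsupp) (simp add: delta_def)

lemma infsum_finsupp: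
  fixes f :: "grp \<Rightarrow> 'b::{comm_monoid_add, t2_space}"
  assumes "finite S" "\<And>x. x \<notin> S \<Longrightarrow> f x = 0"
  shows "infsum f UNIV = sum f S"
proof -
  have "infsum f UNIV = infsum f S"
    by (rule infsum_cong_neutral) (use assms in auto)
  thus ?thesis using assms(1) by simp
qed

lemma linner_finsupp:
  assumes "finite S" "\<And>x. x \<notin> S \<Longrightarrow> \<xi> x = 0"
  shows "linner \<xi> \<eta> = (\<Sum>x\<in>S. cnj (\<xi> x) * \<eta> x)"
  unfolding linner_def by (rule infsum_finsupp) (use assms in auto)

lemma nrm2_finsupp:
  assumes "finite S" "\<And>x. x \<notin> S \<Longrightarrow> \<xi> x = 0"
  shows "nrm2 \<xi> = (\<Sum>x\<in>S. (cmod (\<xi> x))\<^sup>2)"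
  unfolding nrm2_def by (rule infsum_finsupp) (use assms in auto)

lemma linner_delta_left: "linner (delta a) \<eta> = \<eta> a"
  by (subst linner_finsupp[of "{a}"]) (auto simp: delta_def)

lemma linner_delta_right: "linner \<eta> (delta a) = cnj (\<eta> a)"
  by (subst linner_cnj) (simp add: linner_delta_left)

lemma linner_lin_left:
  assumes "\<xi> \<in> l2" "\<xi>' \<in> l2" "\<eta> \<in> l2"
  shows "linner (\<lambda>x. a * \<xi> x + b * \<xi>' x) \<eta> = cnj a * linner \<xi> \<eta> + cnj b * linner \<xi>' \<eta>"
proof -
  have "linner (\<lambda>x. a * \<xi> x + b * \<xi>' x) \<eta> = infsum (\<lambda>x. cnj a * (cnj (\<xi> x) * \<eta> x) + cnj b * (cnj (\<xi>' x) * \<eta> x)) UNIV"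
    unfolding linner_def by (simp add: algebra_simps)
  also have "\<dots> = infsum (\<lambda>x. cnj a * (cnj (\<xi> x) * \<eta> x)) UNIV + infsum (\<lambda>x. cnj b * (cnj (\<xi>' x) * \<eta> x)) UNIV"
    by (rule infsum_add; rule summable_on_cmult_right; rule inner_summable) (use assms in auto)
  also have "\<dots> = cnj a * linner \<xi> \<eta> + cnj b * linner \<xi>' \<eta>"
    unfolding linner_def
    by (simp only: infsum_cmult_right[OF inner_summable[OF assms(1,3)]] infsum_cmult_right[OF inner_summable[OF assms(2,3)]])
  finally show ?thesis .
qed

lemma linner_lin_right:
  assumes "\<xi> \<in> l2" "\<xi>' \<in> l2" "\<eta> \<in> l2"
  shows "linner \<eta> (\<lambda>x. a * \<xi> x + b * \<xi>' x) = a * linner \<eta> \<xi> + b * linner \<eta> \<xi>'"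
proof -
  have "linner \<eta> (\<lambda>x. a * \<xi> x + b * \<xi>' x) = cnj (linner (\<lambda>x. a * \<xi> x + b * \<xi>' x) \<eta>)"
    by (rule linner_cnj)
  also have "\<dots> = cnj (cnj a * linner \<xi> \<eta> + cnj b * linner \<xi>' \<eta>)"
    by (simp only: linner_lin_left[OF assms])
  also have "\<dots> = a * linner \<eta> \<xi> + b * linner \<eta> \<xi>'"
    by (simp add: linner_cnj[of \<eta> \<xi>] linner_cnj[of \<eta> \<xi>'])
  finally show ?thesis .
qed

lemma linner_add_left:
  assumes "\<xi> \<in> l2" "\<xi>' \<in> l2" "\<eta> \<in> l2"
  shows "linner (\<lambda>x. \<xi> x + \<xi>' x) \<eta> = linner \<xi> \<eta> + linner \<xi>' \<eta>"
  using linner_lin_left[OF assms, of 1 1] by simp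

lemma linner_add_right:
  assumes "\<xi> \<in> l2" "\<xi>' \<in> l2" "\<eta> \<in> l2"
  shows "linner \<eta> (\<lambda>x. \<xi> x + \<xi>' x) = linner \<eta> \<xi> + linner \<eta> \<xi>'"
  using linner_lin_right[OF assms, of 1 1] by simp

lemma linner_sum_left:
  assumes "finite F" "\<And>i. i \<in> F \<Longrightarrow> f i \<in> l2" "\<eta> \<in> l2"
  shows "linner (\<lambda>x. \<Sum>i\<in>F. c i * f i x) \<eta> = (\<Sum>i\<in>F. cnj (c i) * linner (f i) \<eta>)"
  using assms
proof (induction F rule: finite_induct)
  case empty
  then show ?case by (simp add: linner_def)
next
  case (insert a F)
  have l: "(\<lambda>x. \<Sum>i\<in>F. c i * f i x) \<in> l2"
    by (rule l2_sum) (use insert in \<open>auto intro: l2_scale\<close>)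
  have "linner (\<lambda>x. \<Sum>i\<in>insert a F. c i * f i x) \<eta> = linner (\<lambda>x. c a * f a x + 1 * (\<Sum>i\<in>F. c i * f i x)) \<eta>"
    using insert by simp
  also have "\<dots> = cnj (c a) * linner (f a) \<eta> + cnj 1 * linner (\<lambda>x. \<Sum>i\<in>F. c i * f i x) \<eta>"
    by (rule linner_lin_left) (use insert l in auto)
  also have "\<dots> = (\<Sum>i\<in>insert a F. cnj (c i) * linner (f i) \<eta>)"
    using insert by simp
  finally show ?case .
qed

section \<open>Bounded operators\<close>

lemma bop_l2: "bop T \<Longrightarrow> \<xi> \<in> l2 \<Longrightarrow> T \<xi> \<in> l2"
  by (simp add: bop_def)

lemma bop_lin: "bop T \<Longrightarrow> \<xi> \<in> l2 \<Longrightarrow> \<eta> \<in> l2 \<Longrightarrow>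
   T (\<lambda>x. a * \<xi> x + b * \<eta> x) = (\<lambda>x. a * T \<xi> x + b * T \<eta> x)"
  by (simp add: bop_def)

lemma bop_out: "bop T \<Longrightarrow> \<xi> \<notin> l2 \<Longrightarrow> T \<xi> = (\<lambda>_. 0)"
  by (simp add: bop_def)

lemma bop_bound: "bop T \<Longrightarrow> \<exists>C\<ge>0. \<forall>\<xi>\<in>l2. lnorm (T \<xi>) \<le> C * lnorm \<xi>"
proof -
  assume "bop T"
  then obtain C where C: "\<forall>\<xi>\<in>l2. lnorm (T \<xi>) \<le> C * lnorm \<xi>" by (auto simp: bop_def)
  have "\<forall>\<xi>\<in>l2. lnorm (T \<xi>) \<le> max C 0 * lnorm \<xi>"
  proof
    fix \<xi> assume "\<xi> \<in> l2"
    hence "lnorm (T \<xi>) \<le> C * lnorm \<xi>" using C by blast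
    also have "\<dots> \<le> max C 0 * lnorm \<xi>" by (rule mult_right_mono) (auto simp: lnorm_nonneg)
    finally show "lnorm (T \<xi>) \<le> max C 0 * lnorm \<xi>" .
  qed
  thus ?thesis by (intro exI[of _ "max C 0"]) auto
qed

lemma bop_zero: "bop T \<Longrightarrow> T (\<lambda>_. 0) = (\<lambda>_. 0)"
  using bop_lin[of T "\<lambda>_. 0" "\<lambda>_. 0" 0 0] by simp

lemma bop_add: "bop T \<Longrightarrow> \<xi> \<in> l2 \<Longrightarrow> \<eta> \<in> l2 \<Longrightarrow> T (\<lambda>x. \<xi> x + \<eta> x) = (\<lambda>x. T \<xi> x + T \<eta> x)"
  using bop_lin[of T \<xi> \<eta> 1 1] by simp

lemma bop_scale: "bop T \<Longrightarrow> \<xi> \<in> l2 \<Longrightarrow> T (\<lambda>x. c * \<xi> x) = (\<lambda>x. c * T \<xi> x)"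
  using bop_lin[of T \<xi> "\<lambda>_. 0" c 0] by simp

lemma bop_sum:
  assumes "bop T" "finite F" "\<And>i. i \<in> F \<Longrightarrow> f i \<in> l2"
  shows "T (\<lambda>x. \<Sum>i\<in>F. c i * f i x) = (\<lambda>x. \<Sum>i\<in>F. c i * T (f i) x)"
  using assms(2,3)
proof (induction F rule: finite_induct)
  case empty
  then show ?case using bop_zero[OF assms(1)] by simp
next
  case (insert a F)
  have l: "(\<lambda>x. \<Sum>i\<in>F. c i * f i x) \<in> l2"
    by (rule l2_sum) (use insert in \<open>auto intro: l2_scale\<close>)
  have "T (\<lambda>x. \<Sum>i\<in>insert a F. c i * f i x) = T (\<lambda>x. c a * f a x + 1 * (\<Sum>i\<in>F. c i * f i x))"
    using insert by simp
  also have "\<dots> = (\<lambda>x. c a * T (f a) x + 1 * T (\<lambda>x. \<Sum>i\<in>F. c i * f i x) x)"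
    by (rule bop_lin[OF assms(1)]) (use insert l in auto)
  also have "\<dots> = (\<lambda>x. \<Sum>i\<in>insert a F. c i * T (f i) x)"
    using insert by simp
  finally show ?case .
qed

lemma finsupp_expand:
  assumes "finite F" "\<And>x. x \<notin> F \<Longrightarrow> \<xi> x = 0"
  shows "\<xi> = (\<lambda>y. \<Sum>x\<in>F. \<xi> x * delta x y)"
proof
  fix y
  show "\<xi> y = (\<Sum>x\<in>F. \<xi> x * delta x y)"
  proof (cases "y \<in> F")
    case True
    have "(\<Sum>x\<in>F. \<xi> x * delta x y) = (\<Sum>x\<in>{y}. \<xi> x * delta x y)"
      by (rule sum.mono_neutral_right) (use True assms(1) in \<open>auto simp: delta_def\<close>)
    then show ?thesis by (simp add: delta_def)
  next
    case False
    then show ?thesis using assms by (auto simp: delta_def intro!: sum.neutral)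
  qed
qed


definition radj :: "oper \<Rightarrow> oper" where
  "radj T \<eta> = (if \<eta> \<in> l2 then (\<lambda>x. linner (T (delta x)) \<eta>) else (\<lambda>_. 0))"

lemma sqrt_bound_aux:
  fixes P C N :: real
  assumes "P \<ge> 0" "C \<ge> 0" "N \<ge> 0" "P \<le> C * sqrt P * N"
  shows "P \<le> (C * N)\<^sup>2"
proof (cases "P = 0")
  case True then show ?thesis by simp
next
  case False
  hence sp: "sqrt P > 0" using assms by simp
  have "sqrt P * sqrt P \<le> C * N * sqrt P" using assms(1,4) by (simp add: algebra_simps)
  hence "sqrt P \<le> C * N" using sp by (rule mult_right_le_imp_le)
  hence "(sqrt P)\<^sup>2 \<le> (C * N)\<^sup>2" using sp by (intro power_mono) auto
  thus ?thesis using assms(1) by simp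
qed

lemma radj_finite_bound:
  assumes T: "bop T" and C: "C \<ge> 0" "\<forall>\<xi>\<in>l2. lnorm (T \<xi>) \<le> C * lnorm \<xi>"
    and eta: "\<eta> \<in> l2" and F: "finite F"
  shows "(\<Sum>x\<in>F. (cmod (radj T \<eta> x))\<^sup>2) \<le> (C * lnorm \<eta>)\<^sup>2"
proof -
  define S where "S = radj T \<eta>"
  have S: "\<And>x. S x = linner (T (delta x)) \<eta>" using eta by (simp add: S_def radj_def)
  define \<zeta> where "\<zeta> = (\<lambda>y. if y \<in> F then S y else 0)"
  have zexp: "\<zeta> = (\<lambda>y. \<Sum>x\<in>F. \<zeta> x * delta x y)"
    by (rule finsupp_expand[OF F]) (simp add: \<zeta>_def)
  have zl2: "\<zeta> \<in> l2" by (rule l2_finsupp) (rule finite_subset[OF _ F], auto simp: \<zeta>_def)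
  define P where "P = (\<Sum>x\<in>F. (cmod (S x))\<^sup>2)"
  have P0: "P \<ge> 0" by (simp add: P_def sum_nonneg)
  have nz: "nrm2 \<zeta> = P" unfolding P_def
    by (subst nrm2_finsupp[OF F]) (auto simp: \<zeta>_def)
  have "T \<zeta> = T (\<lambda>y. \<Sum>x\<in>F. \<zeta> x * delta x y)"
    by (rule arg_cong[where f=T], rule zexp)
  also have "\<dots> = (\<lambda>y. \<Sum>x\<in>F. \<zeta> x * T (delta x) y)"
    by (rule bop_sum[OF T F]) simp
  finally have "T \<zeta> = (\<lambda>y. \<Sum>x\<in>F. \<zeta> x * T (delta x) y)" .
  hence "linner (T \<zeta>) \<eta> = (\<Sum>x\<in>F. cnj (\<zeta> x) * linner (T (delta x)) \<eta>)"
    using linner_sum_left[OF F, of "\<lambda>x. T (delta x)" \<eta> \<zeta>] T eta by (simp add: bop_l2)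
  also have "\<dots> = (\<Sum>x\<in>F. of_real ((cmod (S x))\<^sup>2))"
  proof (rule sum.cong)
    fix x assume x: "x \<in> F"
    show "cnj (\<zeta> x) * linner (T (delta x)) \<eta> = of_real ((cmod (S x))\<^sup>2)"
      using complex_norm_square[of "S x"] x by (simp add: \<zeta>_def S mult.commute)
  qed simp
  also have "\<dots> = of_real P" by (simp add: P_def)
  finally have eq: "linner (T \<zeta>) \<eta> = of_real P" .
  have "P = cmod (linner (T \<zeta>) \<eta>)" using eq P0 by simp
  also have "\<dots> \<le> lnorm (T \<zeta>) * lnorm \<eta>"
    by (rule cauchy_schwarz[OF bop_l2[OF T zl2] eta])
  also have "\<dots> \<le> C * lnorm \<zeta> * lnorm \<eta>"
    by (rule mult_right_mono) (use C zl2 in \<open>auto simp: lnorm_nonneg\<close>)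
  also have "\<dots> = C * sqrt P * lnorm \<eta>" by (simp add: lnorm_nrm2 nz)
  finally have "P \<le> C * sqrt P * lnorm \<eta>" .
  hence "P \<le> (C * lnorm \<eta>)\<^sup>2" by (rule sqrt_bound_aux[OF P0 C(1) lnorm_nonneg])
  thus ?thesis by (simp add: P_def S_def)
qed

lemma radj_l2:
  assumes T: "bop T" and C: "C \<ge> 0" "\<forall>\<xi>\<in>l2. lnorm (T \<xi>) \<le> C * lnorm \<xi>"
    and eta: "\<eta> \<in> l2"
  shows "radj T \<eta> \<in> l2" "lnorm (radj T \<eta>) \<le> C * lnorm \<eta>"
proof -
  have sm: "(\<lambda>x. (cmod (radj T \<eta> x))\<^sup>2) summable_on UNIV"
    by (rule nonneg_bdd_above_summable_on)
       (auto intro!: bdd_aboveI[where M="(C * lnorm \<eta>)\<^sup>2"] radj_finite_bound[OF T C eta])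
  thus "radj T \<eta> \<in> l2" by (simp add: l2_iff)
  have "nrm2 (radj T \<eta>) \<le> (C * lnorm \<eta>)\<^sup>2" unfolding nrm2_def
    by (rule infsum_le_finite_sums[OF sm]) (rule radj_finite_bound[OF T C eta], auto)
  hence "sqrt (nrm2 (radj T \<eta>)) \<le> sqrt ((C * lnorm \<eta>)\<^sup>2)" by (rule real_sqrt_le_mono)
  also have "sqrt ((C * lnorm \<eta>)\<^sup>2) = C * lnorm \<eta>"
    by (rule real_sqrt_unique) (use C in \<open>auto simp: lnorm_nonneg\<close>)
  finally show "lnorm (radj T \<eta>) \<le> C * lnorm \<eta>" by (simp only: lnorm_nrm2)
qed

lemma radj_finsupp:
  assumes T: "bop T" and eta: "\<eta> \<in> l2" and F: "finite F" and \<xi>: "\<And>x. x \<notin> F \<Longrightarrow> \<xi> x = 0"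
  shows "linner (T \<xi>) \<eta> = linner \<xi> (radj T \<eta>)"
proof -
  have "T \<xi> = T (\<lambda>y. \<Sum>x\<in>F. \<xi> x * delta x y)"
    by (rule arg_cong[where f=T], rule finsupp_expand[OF F \<xi>])
  also have "\<dots> = (\<lambda>y. \<Sum>x\<in>F. \<xi> x * T (delta x) y)"
    by (rule bop_sum[OF T F]) simp
  finally have "T \<xi> = (\<lambda>y. \<Sum>x\<in>F. \<xi> x * T (delta x) y)" .
  hence "linner (T \<xi>) \<eta> = (\<Sum>x\<in>F. cnj (\<xi> x) * linner (T (delta x)) \<eta>)"
    using linner_sum_left[OF F, of "\<lambda>x. T (delta x)" \<eta> \<xi>] T eta by (simp add: bop_l2)
  also have "\<dots> = linner \<xi> (radj T \<eta>)"
  proof -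
    have S: "\<And>x. radj T \<eta> x = linner (T (delta x)) \<eta>" using eta by (simp add: radj_def)
    have "linner \<xi> (radj T \<eta>) = (\<Sum>x\<in>F. cnj (\<xi> x) * radj T \<eta> x)"
      by (rule linner_finsupp[OF F]) (rule \<xi>)
    thus ?thesis by (simp only: S)
  qed
  finally show ?thesis .
qed

lemma small_zero:
  fixes D K :: real
  assumes "\<And>e. e > 0 \<Longrightarrow> D \<le> sqrt e * K" "K \<ge> 0"
  shows "D \<le> 0"
proof (rule ccontr)
  assume "\<not> D \<le> 0"
  hence D: "D > 0" by simp
  define e where "e = (D / (K + 1))\<^sup>2"
  have e: "e > 0" using D assms(2) by (simp add: e_def)
  have "sqrt e = D / (K + 1)" using D assms(2) by (simp add: e_def)
  hence "D \<le> D / (K + 1) * K" using assms(1)[OF e] by simp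
  also have "\<dots> < D" using D assms(2) by (simp add: field_simps)
  finally show False by simp
qed

lemma split_l2:
  assumes "\<xi> \<in> l2"
  shows "(\<lambda>x. if x \<in> F then \<xi> x else 0) \<in> l2" "(\<lambda>x. if x \<in> F then 0 else \<xi> x) \<in> l2"
  by (rule l2_mono[OF assms], simp)+

lemma tail_small:
  assumes "\<xi> \<in> l2" "e > 0"
  shows "\<exists>F. finite F \<and> nrm2 (\<lambda>x. if x \<in> F then 0 else \<xi> x) \<le> e"
proof -
  have sm: "(\<lambda>x. (cmod (\<xi> x))\<^sup>2) summable_on UNIV" using assms by (simp add: l2_iff)
  obtain F where F: "finite F" "dist (sum (\<lambda>x. (cmod (\<xi> x))\<^sup>2) F) (nrm2 \<xi>) \<le> e"
    using infsum_finite_approximation[OF sm assms(2)] unfolding nrm2_def by blast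
  define \<rho> where "\<rho> = (\<lambda>x. if x \<in> F then 0 else \<xi> x)"
  define \<phi> where "\<phi> = (\<lambda>x. if x \<in> F then \<xi> x else 0)"
  have s1: "(\<lambda>x. (cmod (\<phi> x))\<^sup>2) summable_on UNIV" and s2: "(\<lambda>x. (cmod (\<rho> x))\<^sup>2) summable_on UNIV"
    using split_l2[OF assms(1), of F] by (simp_all add: l2_iff \<phi>_def \<rho>_def)
  have "nrm2 \<xi> = infsum (\<lambda>x. (cmod (\<phi> x))\<^sup>2 + (cmod (\<rho> x))\<^sup>2) UNIV"
    unfolding nrm2_def by (rule infsum_cong) (simp add: \<phi>_def \<rho>_def)
  also have "\<dots> = nrm2 \<phi> + nrm2 \<rho>" unfolding nrm2_def by (rule infsum_add[OF s1 s2])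
  also have "nrm2 \<phi> = sum (\<lambda>x. (cmod (\<xi> x))\<^sup>2) F"
    by (subst nrm2_finsupp[OF F(1)]) (auto simp: \<phi>_def)
  finally have "nrm2 \<rho> = nrm2 \<xi> - sum (\<lambda>x. (cmod (\<xi> x))\<^sup>2) F" by simp
  with F(2) have "nrm2 \<rho> \<le> e" by (simp add: dist_real_def)
  thus ?thesis using F(1) by (auto simp: \<rho>_def)
qed

lemma radj_rel:
  assumes T: "bop T" and eta: "\<eta> \<in> l2" and xi: "\<xi> \<in> l2"
  shows "linner (T \<xi>) \<eta> = linner \<xi> (radj T \<eta>)"
proof -
  obtain C where C: "C \<ge> 0" "\<forall>\<xi>\<in>l2. lnorm (T \<xi>) \<le> C * lnorm \<xi>" using bop_bound[OF T] by blast
  have Sl2: "radj T \<eta> \<in> l2" and Sb: "lnorm (radj T \<eta>) \<le> C * lnorm \<eta>" using radj_l2[OF T C eta] by auto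
  define D where "D = linner (T \<xi>) \<eta> - linner \<xi> (radj T \<eta>)"
  define K where "K = C * lnorm \<eta> + lnorm (radj T \<eta>)"
  have K: "K \<ge> 0" using C by (simp add: K_def lnorm_nonneg)
  have "cmod D \<le> 0"
  proof (rule small_zero[OF _ K])
    fix e :: real assume e: "e > 0"
    obtain F where F: "finite F" "nrm2 (\<lambda>x. if x \<in> F then 0 else \<xi> x) \<le> e"
      using tail_small[OF xi e] by blast
    define \<rho> where "\<rho> = (\<lambda>x. if x \<in> F then 0 else \<xi> x)"
    define \<phi> where "\<phi> = (\<lambda>x. if x \<in> F then \<xi> x else 0)"
    have pl: "\<phi> \<in> l2" and rl: "\<rho> \<in> l2" using split_l2[OF xi] by (auto simp: \<phi>_def \<rho>_def)
    have xs: "\<xi> = (\<lambda>x. \<phi> x + \<rho> x)" by (auto simp: \<phi>_def \<rho>_def)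
    have Tx: "T \<xi> = (\<lambda>x. T \<phi> x + T \<rho> x)" by (subst xs, rule bop_add[OF T pl rl])
    have e1: "linner (T \<xi>) \<eta> = linner (T \<phi>) \<eta> + linner (T \<rho>) \<eta>"
      unfolding Tx by (rule linner_add_left[OF bop_l2[OF T pl] bop_l2[OF T rl] eta])
    have e2: "linner \<xi> (radj T \<eta>) = linner \<phi> (radj T \<eta>) + linner \<rho> (radj T \<eta>)"
      by (subst xs, rule linner_add_left[OF pl rl Sl2])
    have e3: "linner (T \<phi>) \<eta> = linner \<phi> (radj T \<eta>)"
      by (rule radj_finsupp[OF T eta F(1)]) (simp add: \<phi>_def)
    have DD: "D = linner (T \<rho>) \<eta> - linner \<rho> (radj T \<eta>)" unfolding D_def e1 e2 e3 by simp
    have nr: "lnorm \<rho> \<le> sqrt e" using F(2) by (simp add: lnorm_nrm2 \<rho>_def)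
    have "cmod D \<le> cmod (linner (T \<rho>) \<eta>) + cmod (linner \<rho> (radj T \<eta>))"
      unfolding DD by (rule norm_triangle_ineq4)
    also have "\<dots> \<le> lnorm (T \<rho>) * lnorm \<eta> + lnorm \<rho> * lnorm (radj T \<eta>)"
      by (rule add_mono; rule cauchy_schwarz) (use rl eta Sl2 T in \<open>auto simp: bop_l2\<close>)
    also have "\<dots> \<le> (C * lnorm \<rho>) * lnorm \<eta> + lnorm \<rho> * lnorm (radj T \<eta>)"
      by (rule add_mono, rule mult_right_mono) (use C rl in \<open>auto simp: lnorm_nonneg\<close>)
    also have "\<dots> = lnorm \<rho> * K" by (simp add: K_def algebra_simps)
    also have "\<dots> \<le> sqrt e * K" by (rule mult_right_mono[OF nr K])
    finally show "cmod D \<le> sqrt e * K" .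
  qed
  hence "D = 0" by simp
  thus ?thesis by (simp add: D_def)
qed

lemma radj_bop:
  assumes T: "bop T"
  shows "bop (radj T)"
proof -
  obtain C where C: "C \<ge> 0" "\<forall>\<xi>\<in>l2. lnorm (T \<xi>) \<le> C * lnorm \<xi>" using bop_bound[OF T] by blast
  have lin: "radj T (\<lambda>x. a * \<xi> x + b * \<eta> x) = (\<lambda>x. a * radj T \<xi> x + b * radj T \<eta> x)"
    if "\<xi> \<in> l2" "\<eta> \<in> l2" for \<xi> \<eta> a b
    using that by (simp add: radj_def l2_lin linner_lin_right bop_l2[OF T])
  show ?thesis unfolding bop_def
    using radj_l2[OF T C] lin by (auto simp: radj_def)
qed

lemma adj_unique:
  assumes "bop S" "bop S'"
    "\<forall>\<xi>\<in>l2. \<forall>\<eta>\<in>l2. linner (T \<xi>) \<eta> = linner \<xi> (S \<eta>)"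
    "\<forall>\<xi>\<in>l2. \<forall>\<eta>\<in>l2. linner (T \<xi>) \<eta> = linner \<xi> (S' \<eta>)"
  shows "S = S'"
proof
  fix \<eta>
  show "S \<eta> = S' \<eta>"
  proof (cases "\<eta> \<in> l2")
    case True
    show ?thesis
    proof
      fix x
      have "linner (delta x) (S \<eta>) = linner (delta x) (S' \<eta>)" using assms(3,4) True by simp
      thus "S \<eta> x = S' \<eta> x" by (simp add: linner_delta_left)
    qed
  next
    case False
    then show ?thesis using assms(1,2) by (simp add: bop_out)
  qed
qed

lemma adj_eq:
  assumes "bop T" "bop S" "\<forall>\<xi>\<in>l2. \<forall>\<eta>\<in>l2. linner (T \<xi>) \<eta> = linner \<xi> (S \<eta>)"
  shows "adj T = S"
  unfolding adj_def
  by (rule the_equality) (use assms adj_unique in blast)+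

lemma adj_radj: "bop T \<Longrightarrow> adj T = radj T"
  by (rule adj_eq) (auto simp: radj_bop radj_rel)

lemma adj_bop: "bop T \<Longrightarrow> bop (adj T)"
  by (simp add: adj_radj radj_bop)

lemma adj_rel: "bop T \<Longrightarrow> \<xi> \<in> l2 \<Longrightarrow> \<eta> \<in> l2 \<Longrightarrow> linner (T \<xi>) \<eta> = linner \<xi> (adj T \<eta>)"
  by (simp add: adj_radj radj_rel)


definition Jop :: oper where "Jop \<xi> = (if \<xi> \<in> l2 then \<xi> else (\<lambda>_. 0))"

lemma nrm2_add_le:
  assumes "\<xi> \<in> l2" "\<eta> \<in> l2"
  shows "nrm2 (\<lambda>x. \<xi> x + \<eta> x) \<le> 2 * nrm2 \<xi> + 2 * nrm2 \<eta>"
proof -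
  have s1: "(\<lambda>x. (cmod (\<xi> x))\<^sup>2) summable_on UNIV" and s2: "(\<lambda>x. (cmod (\<eta> x))\<^sup>2) summable_on UNIV"
    using assms by (simp_all add: l2_iff)
  have s3: "(\<lambda>x. (cmod (\<xi> x + \<eta> x))\<^sup>2) summable_on UNIV" using l2_add[OF assms] by (simp add: l2_iff)
  have a1: "(\<lambda>x. 2 * (cmod (\<xi> x))\<^sup>2) summable_on UNIV" by (rule summable_on_cmult_right[OF s1])
  have a2: "(\<lambda>x. 2 * (cmod (\<eta> x))\<^sup>2) summable_on UNIV" by (rule summable_on_cmult_right[OF s2])
  have s4: "(\<lambda>x. 2 * (cmod (\<xi> x))\<^sup>2 + 2 * (cmod (\<eta> x))\<^sup>2) summable_on UNIV"
    by (rule summable_on_add[OF a1 a2])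
  have "nrm2 (\<lambda>x. \<xi> x + \<eta> x) \<le> infsum (\<lambda>x. 2 * (cmod (\<xi> x))\<^sup>2 + 2 * (cmod (\<eta> x))\<^sup>2) UNIV"
    unfolding nrm2_def by (rule infsum_mono[OF s3 s4]) (rule sq_add_le)
  also have "\<dots> = 2 * nrm2 \<xi> + 2 * nrm2 \<eta>" unfolding nrm2_def
    by (simp only: infsum_add[OF a1 a2] infsum_cmult_right[OF s1] infsum_cmult_right[OF s2])
  finally show ?thesis .
qed

lemma nrm2_scale: "nrm2 (\<lambda>x. c * \<xi> x) = (cmod c)\<^sup>2 * nrm2 \<xi>"
proof -
  have "nrm2 (\<lambda>x. c * \<xi> x) = infsum (\<lambda>x. (cmod c)\<^sup>2 * (cmod (\<xi> x))\<^sup>2) UNIV"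
    unfolding nrm2_def by (simp add: norm_mult power_mult_distrib)
  also have "\<dots> = (cmod c)\<^sup>2 * nrm2 \<xi>" unfolding nrm2_def
    by (cases "c = 0") (simp_all add: infsum_cmult_right')
  finally show ?thesis .
qed

lemma lnorm_scale: "lnorm (\<lambda>x. c * \<xi> x) = cmod c * lnorm \<xi>"
  by (simp add: lnorm_nrm2 nrm2_scale real_sqrt_mult)

lemma bopI:
  assumes "\<And>\<xi>. \<xi> \<in> l2 \<Longrightarrow> T \<xi> \<in> l2"
    "\<And>\<xi> \<eta> a b. \<xi> \<in> l2 \<Longrightarrow> \<eta> \<in> l2 \<Longrightarrow> T (\<lambda>x. a * \<xi> x + b * \<eta> x) = (\<lambda>x. a * T \<xi> x + b * T \<eta> x)"
    "\<And>\<xi>. \<xi> \<in> l2 \<Longrightarrow> lnorm (T \<xi>) \<le> C * lnorm \<xi>"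
    "\<And>\<xi>. \<xi> \<notin> l2 \<Longrightarrow> T \<xi> = (\<lambda>_. 0)"
  shows "bop T"
  unfolding bop_def using assms by blast

lemma bop_add_op:
  assumes A: "bop A" and B: "bop B"
  shows "bop (\<lambda>\<xi> x. A \<xi> x + B \<xi> x)"
proof -
  obtain C where C: "C \<ge> 0" "\<forall>\<xi>\<in>l2. lnorm (A \<xi>) \<le> C * lnorm \<xi>" using bop_bound[OF A] by blast
  obtain D where D: "D \<ge> 0" "\<forall>\<xi>\<in>l2. lnorm (B \<xi>) \<le> D * lnorm \<xi>" using bop_bound[OF B] by blast
  have l2p: "(\<lambda>x. A \<xi> x + B \<xi> x) \<in> l2" if x: "\<xi> \<in> l2" for \<xi>
    by (rule l2_add; rule bop_l2) (use A B x in auto)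
  have bd: "lnorm (\<lambda>x. A \<xi> x + B \<xi> x) \<le> sqrt (2 * C\<^sup>2 + 2 * D\<^sup>2) * lnorm \<xi>" if x: "\<xi> \<in> l2" for \<xi>
  proof -
    have a: "nrm2 (A \<xi>) \<le> C\<^sup>2 * nrm2 \<xi>"
    proof -
      have "lnorm (A \<xi>) \<le> C * lnorm \<xi>" using C x by blast
      hence "(lnorm (A \<xi>))\<^sup>2 \<le> (C * lnorm \<xi>)\<^sup>2" by (rule power_mono) (simp add: lnorm_nonneg)
      thus ?thesis by (simp add: lnorm_sq power_mult_distrib)
    qed
    have b: "nrm2 (B \<xi>) \<le> D\<^sup>2 * nrm2 \<xi>"
    proof -
      have "lnorm (B \<xi>) \<le> D * lnorm \<xi>" using D x by blast
      hence "(lnorm (B \<xi>))\<^sup>2 \<le> (D * lnorm \<xi>)\<^sup>2" by (rule power_mono) (simp add: lnorm_nonneg)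
      thus ?thesis by (simp add: lnorm_sq power_mult_distrib)
    qed
    have "nrm2 (\<lambda>x. A \<xi> x + B \<xi> x) \<le> 2 * nrm2 (A \<xi>) + 2 * nrm2 (B \<xi>)"
      by (rule nrm2_add_le; rule bop_l2) (use A B x in auto)
    also have "\<dots> \<le> (2 * C\<^sup>2 + 2 * D\<^sup>2) * nrm2 \<xi>" using a b by (simp add: algebra_simps)
    finally have "sqrt (nrm2 (\<lambda>x. A \<xi> x + B \<xi> x)) \<le> sqrt ((2 * C\<^sup>2 + 2 * D\<^sup>2) * nrm2 \<xi>)"
      by (rule real_sqrt_le_mono)
    thus ?thesis by (simp add: lnorm_nrm2 real_sqrt_mult)
  qed
  have lin: "(\<lambda>x'. A (\<lambda>x. a * \<xi> x + b * \<eta> x) x' + B (\<lambda>x. a * \<xi> x + b * \<eta> x) x') =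
          (\<lambda>x'. a * (A \<xi> x' + B \<xi> x') + b * (A \<eta> x' + B \<eta> x'))"
    if x: "\<xi> \<in> l2" "\<eta> \<in> l2" for \<xi> \<eta> a b
    using bop_lin[OF A x, of a b] bop_lin[OF B x, of a b] by (simp add: algebra_simps)
  have out: "(\<lambda>x. A \<xi> x + B \<xi> x) = (\<lambda>_. 0)" if "\<xi> \<notin> l2" for \<xi>
    using A B that by (simp add: bop_out)
  show ?thesis by (rule bopI[where C="sqrt (2 * C\<^sup>2 + 2 * D\<^sup>2)"]) (simp_all add: l2p lin bd out)
qed

lemma bop_scale_op:
  assumes A: "bop A"
  shows "bop (\<lambda>\<xi> x. c * A \<xi> x)"
proof -
  obtain C where C: "C \<ge> 0" "\<forall>\<xi>\<in>l2. lnorm (A \<xi>) \<le> C * lnorm \<xi>" using bop_bound[OF A] by blast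
  have l2p: "(\<lambda>x. c * A \<xi> x) \<in> l2" if x: "\<xi> \<in> l2" for \<xi>
    by (rule l2_scale, rule bop_l2[OF A x])
  have bd: "lnorm (\<lambda>x. c * A \<xi> x) \<le> (cmod c * C) * lnorm \<xi>" if x: "\<xi> \<in> l2" for \<xi>
  proof -
    have "lnorm (\<lambda>x. c * A \<xi> x) = cmod c * lnorm (A \<xi>)" by (rule lnorm_scale)
    also have "\<dots> \<le> cmod c * (C * lnorm \<xi>)" using C x by (intro mult_left_mono) auto
    finally show ?thesis by (simp add: mult.assoc)
  qed
  have lin: "(\<lambda>x'. c * A (\<lambda>x. a * \<xi> x + b * \<eta> x) x') = (\<lambda>x'. a * (c * A \<xi> x') + b * (c * A \<eta> x'))"
    if x: "\<xi> \<in> l2" "\<eta> \<in> l2" for \<xi> \<eta> a b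
    using bop_lin[OF A x, of a b] by (simp add: algebra_simps)
  have out: "(\<lambda>x. c * A \<xi> x) = (\<lambda>_. 0)" if "\<xi> \<notin> l2" for \<xi>
    using A that by (simp add: bop_out)
  show ?thesis by (rule bopI[where C="cmod c * C"]) (simp_all add: l2p lin bd out)
qed

lemma bop_zero_op: "bop (\<lambda>\<xi> x. 0)"
  by (rule bopI[where C=0]) (auto simp: lnorm_nrm2 nrm2_def)

lemma bop_sum_op:
  assumes "finite F" "\<And>i. i \<in> F \<Longrightarrow> bop (T i)"
  shows "bop (\<lambda>\<xi> x. \<Sum>i\<in>F. c i * T i \<xi> x)"
  using assms
proof (induction F rule: finite_induct)
  case empty
  then show ?case using bop_zero_op by simp
next
  case (insert a F)
  have "bop (\<lambda>\<xi> x. c a * T a \<xi> x + (\<Sum>i\<in>F. c i * T i \<xi> x))"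
    by (rule bop_add_op[where A="\<lambda>\<xi> x. c a * T a \<xi> x" and B="\<lambda>\<xi> x. \<Sum>i\<in>F. c i * T i \<xi> x", OF bop_scale_op])
       (use insert in auto)
  then show ?case using insert by simp
qed

lemma bop_comp:
  assumes A: "bop A" and B: "bop B"
  shows "bop (A \<circ> B)"
proof -
  obtain C where C: "C \<ge> 0" "\<forall>\<xi>\<in>l2. lnorm (A \<xi>) \<le> C * lnorm \<xi>" using bop_bound[OF A] by blast
  obtain D where D: "D \<ge> 0" "\<forall>\<xi>\<in>l2. lnorm (B \<xi>) \<le> D * lnorm \<xi>" using bop_bound[OF B] by blast
  have l2p: "A (B \<xi>) \<in> l2" if x: "\<xi> \<in> l2" for \<xi> using A B x by (simp add: bop_l2)
  have bd: "lnorm (A (B \<xi>)) \<le> (C * D) * lnorm \<xi>" if x: "\<xi> \<in> l2" for \<xi>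
  proof -
    have "lnorm (A (B \<xi>)) \<le> C * lnorm (B \<xi>)" using C bop_l2[OF B x] by blast
    also have "\<dots> \<le> C * (D * lnorm \<xi>)" using D x C by (intro mult_left_mono) auto
    finally show ?thesis by (simp add: mult.assoc)
  qed
  have lin: "A (B (\<lambda>x. a * \<xi> x + b * \<eta> x)) = (\<lambda>x. a * A (B \<xi>) x + b * A (B \<eta>) x)"
    if x: "\<xi> \<in> l2" "\<eta> \<in> l2" for \<xi> \<eta> a b
    using x A B by (simp add: bop_lin bop_l2)
  have out: "A (B \<xi>) = (\<lambda>_. 0)" if "\<xi> \<notin> l2" for \<xi>
    using A B that by (simp add: bop_out bop_zero)
  show ?thesis by (rule bopI[where C="C * D"]) (simp_all add: l2p lin bd out)
qed

lemma bop_Jop: "bop Jop"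
proof (rule bopI[where C=1])
  show "\<And>\<xi>. \<xi> \<in> l2 \<Longrightarrow> Jop \<xi> \<in> l2" by (simp add: Jop_def)
  show "\<And>\<xi> \<eta> a b. \<xi> \<in> l2 \<Longrightarrow> \<eta> \<in> l2 \<Longrightarrow> Jop (\<lambda>x. a * \<xi> x + b * \<eta> x) = (\<lambda>x. a * Jop \<xi> x + b * Jop \<eta> x)"
    by (simp add: Jop_def l2_lin)
  show "\<And>\<xi>. \<xi> \<in> l2 \<Longrightarrow> lnorm (Jop \<xi>) \<le> 1 * lnorm \<xi>" by (simp add: Jop_def)
  show "\<And>\<xi>. \<xi> \<notin> l2 \<Longrightarrow> Jop \<xi> = (\<lambda>_. 0)" by (simp add: Jop_def)
qed

lemma bop_J_right: "bop T \<Longrightarrow> T \<circ> Jop = T"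
  by (rule ext) (auto simp: Jop_def bop_out bop_zero)

lemma bop_J_left: "bop T \<Longrightarrow> Jop \<circ> T = T"
proof (rule ext)
  fix \<xi> assume T: "bop T"
  show "(Jop \<circ> T) \<xi> = T \<xi>" by (cases "\<xi> \<in> l2") (use T in \<open>simp_all add: Jop_def bop_l2 bop_out\<close>)
qed

lemma comp_J_right: "bop T \<Longrightarrow> T (Jop \<xi>) = T \<xi>"
  using bop_J_right[of T] by (metis comp_apply)

lemma adj_adj:
  assumes T: "bop T"
  shows "adj (adj T) = T"
proof (rule adj_eq[OF adj_bop[OF T] T])
  show "\<forall>\<xi>\<in>l2. \<forall>\<eta>\<in>l2. linner (adj T \<xi>) \<eta> = linner \<xi> (T \<eta>)"
  proof (intro ballI)
    fix \<xi> \<eta> assume x: "\<xi> \<in> l2" "\<eta> \<in> l2"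
    have "linner (adj T \<xi>) \<eta> = cnj (linner \<eta> (adj T \<xi>))" by (rule linner_cnj)
    also have "linner \<eta> (adj T \<xi>) = linner (T \<eta>) \<xi>" by (rule adj_rel[OF T x(2) x(1), symmetric])
    also have "cnj (linner (T \<eta>) \<xi>) = linner \<xi> (T \<eta>)" by (rule linner_cnj[symmetric])
    finally show "linner (adj T \<xi>) \<eta> = linner \<xi> (T \<eta>)" .
  qed
qed

lemma adj_comp:
  assumes "bop A" "bop B"
  shows "adj (A \<circ> B) = adj B \<circ> adj A"
proof (rule adj_eq[OF bop_comp[OF assms] bop_comp[OF adj_bop[OF assms(2)] adj_bop[OF assms(1)]]])
  show "\<forall>\<xi>\<in>l2. \<forall>\<eta>\<in>l2. linner ((A \<circ> B) \<xi>) \<eta> = linner \<xi> ((adj B \<circ> adj A) \<eta>)"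
  proof (intro ballI)
    fix \<xi> \<eta> assume x: "\<xi> \<in> l2" "\<eta> \<in> l2"
    have "linner ((A \<circ> B) \<xi>) \<eta> = linner (A (B \<xi>)) \<eta>" by simp
    also have "\<dots> = linner (B \<xi>) (adj A \<eta>)" by (rule adj_rel[OF assms(1) bop_l2[OF assms(2) x(1)] x(2)])
    also have "\<dots> = linner \<xi> (adj B (adj A \<eta>))"
      by (rule adj_rel[OF assms(2) x(1) bop_l2[OF adj_bop[OF assms(1)] x(2)]])
    finally show "linner ((A \<circ> B) \<xi>) \<eta> = linner \<xi> ((adj B \<circ> adj A) \<eta>)" by simp
  qed
qed

lemma comm_anti: "X \<subseteq> Y \<Longrightarrow> comm Y \<subseteq> comm X"
  by (auto simp: comm_def)

lemma comm_bop: "comm X \<subseteq> Collect bop"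
  by (auto simp: comm_def)

lemma comm_double: "X \<subseteq> Collect bop \<Longrightarrow> X \<subseteq> comm (comm X)"
  by (auto simp: comm_def)

lemma comm_triple: "X \<subseteq> Collect bop \<Longrightarrow> comm (comm (comm X)) = comm X"
proof (rule antisym)
  assume X: "X \<subseteq> Collect bop"
  show "comm (comm (comm X)) \<subseteq> comm X" by (rule comm_anti[OF comm_double[OF X]])
  show "comm X \<subseteq> comm (comm (comm X))" by (rule comm_double[OF comm_bop])
qed

lemma commD: "T \<in> comm X \<Longrightarrow> A \<in> X \<Longrightarrow> T \<circ> A = A \<circ> T"
  by (simp add: comm_def)

lemma commI: "bop T \<Longrightarrow> (\<And>A. A \<in> X \<Longrightarrow> T \<circ> A = A \<circ> T) \<Longrightarrow> T \<in> comm X"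
  by (simp add: comm_def)

lemma comm_adj_closed:
  assumes X: "X \<subseteq> Collect bop" "\<And>A. A \<in> X \<Longrightarrow> adj A \<in> X" and T: "T \<in> comm X"
  shows "adj T \<in> comm X"
proof (rule commI)
  have Tb: "bop T" using T comm_bop by blast
  show "bop (adj T)" by (rule adj_bop[OF Tb])
  fix A assume A: "A \<in> X"
  have Ab: "bop A" using A X by blast
  have "adj T \<circ> A = adj (adj A \<circ> T)" using Ab Tb by (simp add: adj_comp adj_bop adj_adj)
  also have "adj A \<circ> T = T \<circ> adj A" using commD[OF T X(2)[OF A]] by simp
  also have "adj (T \<circ> adj A) = A \<circ> adj T" using Ab Tb by (simp add: adj_comp adj_bop adj_adj)
  finally show "adj T \<circ> A = A \<circ> adj T" .
qed

lemma comm_comp: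
  assumes "A \<in> comm X" "B \<in> comm X"
  shows "A \<circ> B \<in> comm X"
proof (rule commI)
  show "bop (A \<circ> B)" using assms comm_bop by (blast intro: bop_comp)
  fix C assume "C \<in> X"
  hence c1: "A \<circ> C = C \<circ> A" and c2: "B \<circ> C = C \<circ> B" using commD[OF assms(1)] commD[OF assms(2)] by auto
  have "A \<circ> B \<circ> C = A \<circ> (B \<circ> C)" by (rule comp_assoc)
  also have "\<dots> = A \<circ> (C \<circ> B)" by (simp only: c2)
  also have "\<dots> = (A \<circ> C) \<circ> B" by (rule comp_assoc[symmetric])
  also have "\<dots> = (C \<circ> A) \<circ> B" by (simp only: c1)
  also have "\<dots> = C \<circ> (A \<circ> B)" by (rule comp_assoc)
  finally show "A \<circ> B \<circ> C = C \<circ> (A \<circ> B)" .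
qed

lemma comm_sum:
  assumes X: "X \<subseteq> Collect bop" and F: "finite F" and T: "\<And>i. i \<in> F \<Longrightarrow> T i \<in> comm X"
  shows "(\<lambda>\<xi> x. \<Sum>i\<in>F. c i * T i \<xi> x) \<in> comm X"
proof (rule commI)
  have Tb: "\<And>i. i \<in> F \<Longrightarrow> bop (T i)" using T comm_bop by blast
  show "bop (\<lambda>\<xi> x. \<Sum>i\<in>F. c i * T i \<xi> x)" by (rule bop_sum_op[OF F Tb])
  fix A assume A: "A \<in> X"
  have Ab: "bop A" using A X by blast
  have TA: "\<And>i \<xi>. i \<in> F \<Longrightarrow> T i (A \<xi>) = A (T i \<xi>)"
  proof -
    fix i \<xi> assume i: "i \<in> F"
    have "T i \<circ> A = A \<circ> T i" by (rule commD[OF T[OF i] A])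
    thus "T i (A \<xi>) = A (T i \<xi>)" by (metis comp_apply)
  qed
  have "A (\<lambda>x. \<Sum>i\<in>F. c i * T i \<xi> x) = (\<lambda>x. \<Sum>i\<in>F. c i * T i (A \<xi>) x)" for \<xi>
  proof (cases "\<xi> \<in> l2")
    case True
    have "A (\<lambda>x. \<Sum>i\<in>F. c i * T i \<xi> x) = (\<lambda>x. \<Sum>i\<in>F. c i * A (T i \<xi>) x)"
      by (rule bop_sum[OF Ab F]) (rule bop_l2[OF Tb True])
    also have "\<dots> = (\<lambda>x. \<Sum>i\<in>F. c i * T i (A \<xi>) x)"
      by (rule ext, rule sum.cong) (simp_all add: TA)
    finally show ?thesis .
  next
    case False
    have z1: "\<And>i. i \<in> F \<Longrightarrow> T i \<xi> = (\<lambda>_. 0)" using False Tb bop_out by blast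
    have z2: "A \<xi> = (\<lambda>_. 0)" using False Ab bop_out by blast
    have z3: "\<And>i. i \<in> F \<Longrightarrow> T i (\<lambda>_. 0) = (\<lambda>_. 0)" using Tb bop_zero by blast
    have "(\<lambda>x. \<Sum>i\<in>F. c i * T i \<xi> x) = (\<lambda>_. 0)"
      by (rule ext, rule sum.neutral) (simp add: z1)
    hence "A (\<lambda>x. \<Sum>i\<in>F. c i * T i \<xi> x) = (\<lambda>_. 0)" using bop_zero[OF Ab] by simp
    also have "\<dots> = (\<lambda>x. \<Sum>i\<in>F. c i * T i (A \<xi>) x)"
      by (rule ext, rule sum.neutral[symmetric]) (simp add: z2 z3)
    finally show ?thesis .
  qed
  thus "(\<lambda>\<xi> x. \<Sum>i\<in>F. c i * T i \<xi> x) \<circ> A = A \<circ> (\<lambda>\<xi> x. \<Sum>i\<in>F. c i * T i \<xi> x)"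
    by (simp add: fun_eq_iff)
qed

section \<open>Generated von Neumann algebras\<close>

lemma vNgen_bop: "vNgen S \<subseteq> Collect bop"
  by (simp add: vNgen_def comm_bop)

lemma gens_bop: "S \<subseteq> Collect bop \<Longrightarrow> S \<union> adj ` S \<subseteq> Collect bop"
  by (auto simp: adj_bop)

lemma gens_adj: "S \<subseteq> Collect bop \<Longrightarrow> A \<in> S \<union> adj ` S \<Longrightarrow> adj A \<in> S \<union> adj ` S"
  by (auto simp: adj_adj)

lemma vNgen_adj:
  assumes "S \<subseteq> Collect bop" "T \<in> vNgen S"
  shows "adj T \<in> vNgen S"
  unfolding vNgen_def
proof (rule comm_adj_closed[OF comm_bop])
  show "\<And>A. A \<in> comm (S \<union> adj ` S) \<Longrightarrow> adj A \<in> comm (S \<union> adj ` S)"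
    by (rule comm_adj_closed[OF gens_bop[OF assms(1)] gens_adj[OF assms(1)]])
  show "T \<in> comm (comm (S \<union> adj ` S))" using assms(2) by (simp add: vNgen_def)
qed

lemma is_vNa_vNgen:
  assumes "S \<subseteq> Collect bop"
  shows "is_vNa (vNgen S)"
  unfolding is_vNa_def
proof (intro conjI)
  show "vNgen S \<subseteq> Collect bop" by (rule vNgen_bop)
  show "\<forall>T\<in>vNgen S. adj T \<in> vNgen S" using vNgen_adj[OF assms] by blast
  show "comm (comm (vNgen S)) = vNgen S" unfolding vNgen_def
    by (rule comm_triple[OF comm_bop])
qed

lemma vNgen_mono: "S \<subseteq> S' \<Longrightarrow> vNgen S \<subseteq> vNgen S'"
  unfolding vNgen_def by (intro comm_anti) auto

lemma vNgen_sub: "S \<subseteq> Collect bop \<Longrightarrow> S \<subseteq> vNgen S"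
  unfolding vNgen_def using comm_double[OF gens_bop] by blast

lemma vNa_least:
  assumes "is_vNa M" "S \<subseteq> M"
  shows "vNgen S \<subseteq> M"
proof -
  have "S \<union> adj ` S \<subseteq> M" using assms by (auto simp: is_vNa_def)
  hence "vNgen S \<subseteq> comm (comm M)" unfolding vNgen_def by (intro comm_anti)
  thus ?thesis using assms(1) by (simp add: is_vNa_def)
qed

lemma vNgen_comm:
  assumes "S \<subseteq> Collect bop"
  shows "comm (vNgen S) = comm (S \<union> adj ` S)"
  unfolding vNgen_def by (rule comm_triple[OF gens_bop[OF assms]])

lemma vNa_comp: "is_vNa M \<Longrightarrow> A \<in> M \<Longrightarrow> B \<in> M \<Longrightarrow> A \<circ> B \<in> M"
  unfolding is_vNa_def by (metis comm_comp)

lemma vNa_sum: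
  assumes "is_vNa M" "finite F" "\<And>i. i \<in> F \<Longrightarrow> T i \<in> M"
  shows "(\<lambda>\<xi> x. \<Sum>i\<in>F. c i * T i \<xi> x) \<in> M"
proof -
  have "(\<lambda>\<xi> x. \<Sum>i\<in>F. c i * T i \<xi> x) \<in> comm (comm M)"
    by (rule comm_sum[OF comm_bop assms(2)]) (use assms in \<open>auto simp: is_vNa_def\<close>)
  thus ?thesis using assms(1) by (simp add: is_vNa_def)
qed


declare add_bit_eq_xor[simp del] mult_bit_eq_and[simp del]

lemma bit_cases: "(x::bit) = 0 \<or> x = 1"
  using bit_not_zero_iff by blast

lemma bit_add_self[simp]: "(x::bit) + x = 0"
  using bit_cases[of x] by auto

lemma bit_uminus[simp]: "- (x::bit) = x"
  using bit_cases[of x] by auto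

lemma bit_minus: "(x::bit) - y = x + y"
  by (metis bit_uminus diff_conv_add_uminus)

section \<open>Bounded matrices\<close>

definition bnd :: "nat \<Rightarrow> mat2 \<Rightarrow> bool" where
  "bnd n A \<longleftrightarrow> (\<forall>i j. (n \<le> i \<or> n \<le> j) \<longrightarrow> A i j = idm i j)"

definition vbnd :: "nat \<Rightarrow> vec2 \<Rightarrow> bool" where
  "vbnd n v \<longleftrightarrow> (\<forall>j. n \<le> j \<longrightarrow> v j = 0)"

lemma bnd_mono: "bnd n A \<Longrightarrow> n \<le> n' \<Longrightarrow> bnd n' A"
  unfolding bnd_def by auto

lemma vbnd_mono: "vbnd n v \<Longrightarrow> n \<le> n' \<Longrightarrow> vbnd n' v"
  unfolding vbnd_def by auto

lemma finitary_bnd: "finitary A \<longleftrightarrow> (\<exists>n. bnd n A)"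
proof
  assume "finitary A"
  hence f: "finite {(i, j). A i j \<noteq> idm i j}" by (simp add: finitary_def)
  hence "finite (fst ` {(i, j). A i j \<noteq> idm i j} \<union> snd ` {(i, j). A i j \<noteq> idm i j})" by simp
  then obtain n where n: "\<forall>x \<in> fst ` {(i, j). A i j \<noteq> idm i j} \<union> snd ` {(i, j). A i j \<noteq> idm i j}. x < n"
    using finite_nat_set_iff_bounded by blast
  have "bnd n A" unfolding bnd_def
  proof (intro allI impI)
    fix i j assume "n \<le> i \<or> n \<le> j"
    thus "A i j = idm i j" using n by (metis (mono_tags, lifting) UnCI case_prod_conv fst_conv image_eqI leD mem_Collect_eq snd_conv)
  qed
  thus "\<exists>n. bnd n A" by blast
next
  assume "\<exists>n. bnd n A"
  then obtain n where n: "bnd n A" by blast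
  have "{(i, j). A i j \<noteq> idm i j} \<subseteq> {..<n} \<times> {..<n}"
    using n unfolding bnd_def by (auto simp: not_le[symmetric])
  thus "finitary A" unfolding finitary_def by (rule finite_subset) simp
qed

lemma fsupp_vbnd: "fsupp v \<longleftrightarrow> (\<exists>n. vbnd n v)"
proof
  assume "fsupp v"
  hence "finite {i. v i \<noteq> 0}" by (simp add: fsupp_def)
  then obtain n where "\<forall>x\<in>{i. v i \<noteq> 0}. x < n" using finite_nat_set_iff_bounded by blast
  hence "vbnd n v" unfolding vbnd_def by (auto simp: not_le[symmetric])
  thus "\<exists>n. vbnd n v" by blast
next
  assume "\<exists>n. vbnd n v"
  then obtain n where "vbnd n v" by blast
  hence "{i. v i \<noteq> 0} \<subseteq> {..<n}" unfolding vbnd_def by (auto simp: not_le[symmetric])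
  thus "fsupp v" unfolding fsupp_def by (rule finite_subset) simp
qed

lemma bnd_idm: "bnd n idm"
  by (simp add: bnd_def)

lemma mm_lt:
  assumes "bnd n A" "n \<le> m" "i < m"
  shows "mm A B i k = (\<Sum>j<m. A i j * B j k)"
  unfolding mm_def
proof (rule sum.mono_neutral_left)
  show "{j. A i j \<noteq> 0} \<subseteq> {..<m}"
  proof
    fix j assume j: "j \<in> {j. A i j \<noteq> 0}"
    show "j \<in> {..<m}"
    proof (rule ccontr)
      assume "j \<notin> {..<m}"
      hence "m \<le> j" by simp
      hence "A i j = idm i j" using assms unfolding bnd_def by auto
      also have "idm i j = 0" using \<open>m \<le> j\<close> assms(3) by (simp add: idm_def)
      finally show False using j by simp
    qed
  qed
qed auto

lemma mv_lt:
  assumes "vbnd n v" "n \<le> m"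
  shows "mv M v i = (\<Sum>j<m. M i j * v j)"
  unfolding mv_def
proof (rule sum.mono_neutral_left)
  show "{j. v j \<noteq> 0} \<subseteq> {..<m}" using assms unfolding vbnd_def by (auto simp: not_le[symmetric])
qed auto

lemma sum_idm_left:
  assumes "i < m"
  shows "(\<Sum>j<m. idm i j * f j) = (f i :: bit)"
proof -
  have "(\<Sum>j<m. idm i j * f j) = (\<Sum>j\<in>{i}. idm i j * f j)"
    by (rule sum.mono_neutral_right) (use assms in \<open>auto simp: idm_def\<close>)
  thus ?thesis by (simp add: idm_def)
qed

lemma sum_idm_right:
  assumes "k < m"
  shows "(\<Sum>j<m. f j * idm j k) = (f k :: bit)"
proof -
  have "(\<Sum>j<m. f j * idm j k) = (\<Sum>j\<in>{k}. f j * idm j k)"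
    by (rule sum.mono_neutral_right) (use assms in \<open>auto simp: idm_def\<close>)
  thus ?thesis by (simp add: idm_def)
qed

lemma mm_bnd:
  assumes A: "bnd n A" and B: "bnd n B"
  shows "bnd n (mm A B)"
  unfolding bnd_def
proof (intro allI impI)
  fix i k assume ik: "n \<le> i \<or> n \<le> k"
  define m where "m = max n (max (Suc i) (Suc k))"
  have m: "n \<le> m" "i < m" "k < m" by (auto simp: m_def)
  have e: "mm A B i k = (\<Sum>j<m. A i j * B j k)" by (rule mm_lt[OF A m(1,2)])
  show "mm A B i k = idm i k"
  proof (cases "n \<le> i")
    case True
    have "(\<Sum>j<m. A i j * B j k) = (\<Sum>j<m. idm i j * B j k)"
      using A True by (auto simp: bnd_def intro!: sum.cong)
    also have "\<dots> = B i k" by (rule sum_idm_left[OF m(2)])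
    also have "\<dots> = idm i k" using B True by (simp add: bnd_def)
    finally show ?thesis using e by simp
  next
    case False
    hence k: "n \<le> k" using ik by simp
    have "(\<Sum>j<m. A i j * B j k) = (\<Sum>j<m. A i j * idm j k)"
      using B k by (auto simp: bnd_def intro!: sum.cong)
    also have "\<dots> = A i k" by (rule sum_idm_right[OF m(3)])
    also have "\<dots> = idm i k" using A k by (simp add: bnd_def)
    finally show ?thesis using e by simp
  qed
qed

lemma mm_assoc:
  assumes A: "bnd n A" and B: "bnd n B" and C: "bnd n C"
  shows "mm (mm A B) C = mm A (mm B C)"
proof (intro ext)
  fix i l
  define m where "m = max n (Suc i)"
  have m: "n \<le> m" "i < m" by (auto simp: m_def)
  have AB: "bnd n (mm A B)" by (rule mm_bnd[OF A B])
  have "mm (mm A B) C i l = (\<Sum>j<m. mm A B i j * C j l)" by (rule mm_lt[OF AB m])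
  also have "\<dots> = (\<Sum>j<m. (\<Sum>p<m. A i p * B p j) * C j l)"
    by (rule sum.cong) (simp_all add: mm_lt[OF A m])
  also have "\<dots> = (\<Sum>j<m. \<Sum>p<m. A i p * B p j * C j l)"
    by (simp add: sum_distrib_right)
  also have "\<dots> = (\<Sum>p<m. \<Sum>j<m. A i p * B p j * C j l)"
    by (rule sum.swap)
  also have "\<dots> = (\<Sum>p<m. A i p * (\<Sum>j<m. B p j * C j l))"
    by (simp add: sum_distrib_left mult.assoc)
  also have "\<dots> = (\<Sum>p<m. A i p * mm B C p l)"
    by (rule sum.cong) (simp_all add: mm_lt[OF B m(1)])
  also have "\<dots> = mm A (mm B C) i l" by (rule mm_lt[OF A m, symmetric])
  finally show "mm (mm A B) C i l = mm A (mm B C) i l" .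
qed

lemma mm_idm_left[simp]: "mm idm B = B"
proof (intro ext)
  fix i k
  have "{j. idm i j \<noteq> 0} = {i}" by (auto simp: idm_def)
  thus "mm idm B i k = B i k" by (simp add: mm_def idm_def)
qed

lemma mm_idm_right:
  assumes A: "bnd n A"
  shows "mm A idm = A"
proof (intro ext)
  fix i k
  define m where "m = max n (max (Suc i) (Suc k))"
  have m: "n \<le> m" "i < m" "k < m" by (auto simp: m_def)
  show "mm A idm i k = A i k" by (simp add: mm_lt[OF A m(1,2)] sum_idm_right[OF m(3)])
qed

lemma mv_vbnd:
  assumes M: "bnd n M" and v: "vbnd n v"
  shows "vbnd n (mv M v)"
  unfolding vbnd_def
proof (intro allI impI)
  fix i assume i: "n \<le> i"
  define m where "m = max n (Suc i)"
  have m: "n \<le> m" "i < m" by (auto simp: m_def)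
  have "mv M v i = (\<Sum>j<m. M i j * v j)" by (rule mv_lt[OF v m(1)])
  also have "\<dots> = (\<Sum>j<m. idm i j * v j)" using M i by (auto simp: bnd_def intro!: sum.cong)
  also have "\<dots> = v i" by (rule sum_idm_left[OF m(2)])
  also have "\<dots> = 0" using v i by (simp add: vbnd_def)
  finally show "mv M v i = 0" .
qed

lemma mv_idm:
  assumes v: "vbnd n v"
  shows "mv idm v = v"
proof (intro ext)
  fix i
  define m where "m = max n (Suc i)"
  have m: "n \<le> m" "i < m" by (auto simp: m_def)
  show "mv idm v i = v i" by (simp add: mv_lt[OF v m(1)] sum_idm_left[OF m(2)])
qed

lemma mv_zero[simp]: "mv M (\<lambda>_. 0) = (\<lambda>_. 0)"
  by (simp add: mv_def)

lemma vbnd_zero[simp]: "vbnd n (\<lambda>_. 0)"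
  by (simp add: vbnd_def)

lemma vbnd_add: "vbnd n v \<Longrightarrow> vbnd n w \<Longrightarrow> vbnd n (\<lambda>i. v i + w i)"
  by (simp add: vbnd_def)

lemma mv_add:
  assumes v: "vbnd n v" and w: "vbnd n w"
  shows "mv M (\<lambda>i. v i + w i) = (\<lambda>i. mv M v i + mv M w i)"
proof (intro ext)
  fix i
  have vw: "vbnd n (\<lambda>i. v i + w i)" by (rule vbnd_add[OF v w])
  show "mv M (\<lambda>i. v i + w i) i = mv M v i + mv M w i"
    by (simp add: mv_lt[OF vw order_refl] mv_lt[OF v order_refl] mv_lt[OF w order_refl]
        sum.distrib distrib_left)
qed

lemma mv_mm:
  assumes A: "bnd n A" and B: "bnd n B" and v: "vbnd n v"
  shows "mv (mm A B) v = mv A (mv B v)"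
proof (intro ext)
  fix i
  define m where "m = max n (Suc i)"
  have m: "n \<le> m" "i < m" by (auto simp: m_def)
  have Bv: "vbnd n (mv B v)" by (rule mv_vbnd[OF B v])
  have "mv (mm A B) v i = (\<Sum>j<m. mm A B i j * v j)" by (rule mv_lt[OF v m(1)])
  also have "\<dots> = (\<Sum>j<m. (\<Sum>p<m. A i p * B p j) * v j)"
    by (rule sum.cong) (simp_all add: mm_lt[OF A m])
  also have "\<dots> = (\<Sum>j<m. \<Sum>p<m. A i p * B p j * v j)" by (simp add: sum_distrib_right)
  also have "\<dots> = (\<Sum>p<m. \<Sum>j<m. A i p * B p j * v j)" by (rule sum.swap)
  also have "\<dots> = (\<Sum>p<m. A i p * (\<Sum>j<m. B p j * v j))" by (simp add: sum_distrib_left mult.assoc)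
  also have "\<dots> = (\<Sum>p<m. A i p * mv B v p)"
    by (rule sum.cong) (simp_all add: mv_lt[OF v m(1)])
  also have "\<dots> = mv A (mv B v) i" by (rule mv_lt[OF Bv m(1), symmetric])
  finally show "mv (mm A B) v i = mv A (mv B v) i" .
qed

lemma mv_unit:
  assumes "bnd n M"
  shows "mv M (\<lambda>i. if i = j then 1 else 0) k = M k j"
proof -
  have v: "vbnd (Suc j) (\<lambda>i. if i = j then (1::bit) else 0)" by (simp add: vbnd_def)
  define m where "m = max n (Suc j)"
  have m: "Suc j \<le> m" "j < m" by (auto simp: m_def)
  have "mv M (\<lambda>i. if i = j then 1 else 0) k = (\<Sum>i<m. M k i * (if i = j then 1 else 0))"
    by (rule mv_lt[OF v m(1)])
  also have "\<dots> = (\<Sum>i\<in>{j}. M k i * (if i = j then 1 else 0))"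
    by (rule sum.mono_neutral_right) (use m in auto)
  finally show ?thesis by simp
qed


lemma GLinfD:
  assumes "g \<in> GLinf"
  shows "finitary g" "finitary (minv g)" "mm g (minv g) = idm" "mm (minv g) g = idm"
proof -
  have ex: "\<exists>B. finitary B \<and> mm g B = idm \<and> mm B g = idm" and f: "finitary g"
    using assms by (auto simp: GLinf_def)
  have "finitary (minv g) \<and> mm g (minv g) = idm \<and> mm (minv g) g = idm"
    unfolding minv_def by (rule someI_ex[OF ex])
  thus "finitary g" "finitary (minv g)" "mm g (minv g) = idm" "mm (minv g) g = idm" using f by auto
qed

lemma bnd_common2: "finitary A \<Longrightarrow> finitary B \<Longrightarrow> \<exists>n. bnd n A \<and> bnd n B"
  unfolding finitary_bnd by (metis bnd_mono max.cobounded1 max.cobounded2)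

lemma bnd_common3: "finitary A \<Longrightarrow> finitary B \<Longrightarrow> finitary C \<Longrightarrow> \<exists>n. bnd n A \<and> bnd n B \<and> bnd n C"
proof -
  assume "finitary A" "finitary B" "finitary C"
  then obtain a b c where "bnd a A" "bnd b B" "bnd c C" unfolding finitary_bnd by blast
  hence "bnd (max a (max b c)) A \<and> bnd (max a (max b c)) B \<and> bnd (max a (max b c)) C"
    by (meson bnd_mono max.cobounded1 max.cobounded2 order_trans)
  thus ?thesis by blast
qed

lemma finitary_mm: "finitary A \<Longrightarrow> finitary B \<Longrightarrow> finitary (mm A B)"
  using bnd_common2 mm_bnd finitary_bnd by metis

lemma mm_assoc_f: "finitary A \<Longrightarrow> finitary B \<Longrightarrow> finitary C \<Longrightarrow> mm (mm A B) C = mm A (mm B C)"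
  using bnd_common3 mm_assoc by metis

lemma mm_idm_right_f: "finitary A \<Longrightarrow> mm A idm = A"
  using finitary_bnd mm_idm_right by metis

lemma finitary_idm: "finitary idm"
  by (simp add: finitary_def)

lemma idm_GLinf: "idm \<in> GLinf"
  unfolding GLinf_def using finitary_idm mm_idm_left by blast

lemma minv_GLinf:
  assumes "g \<in> GLinf" shows "minv g \<in> GLinf"
  using GLinfD[OF assms] unfolding GLinf_def by blast

lemma mm_GLinf:
  assumes g: "g \<in> GLinf" and h: "h \<in> GLinf"
  shows "mm g h \<in> GLinf"
proof -
  note G = GLinfD[OF g] and H = GLinfD[OF h]
  have "mm (mm g h) (mm (minv h) (minv g)) = mm g (mm h (mm (minv h) (minv g)))"
    by (rule mm_assoc_f) (simp_all add: G H finitary_mm)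
  also have "mm h (mm (minv h) (minv g)) = mm (mm h (minv h)) (minv g)"
    by (rule mm_assoc_f[symmetric]) (simp_all add: G H)
  also have "\<dots> = minv g" by (simp add: H)
  finally have 1: "mm (mm g h) (mm (minv h) (minv g)) = idm" by (simp add: G)
  have "mm (mm (minv h) (minv g)) (mm g h) = mm (minv h) (mm (minv g) (mm g h))"
    by (rule mm_assoc_f) (simp_all add: G H finitary_mm)
  also have "mm (minv g) (mm g h) = mm (mm (minv g) g) h"
    by (rule mm_assoc_f[symmetric]) (simp_all add: G H)
  also have "\<dots> = h" by (simp add: G)
  finally have 2: "mm (mm (minv h) (minv g)) (mm g h) = idm" by (simp add: H)
  show ?thesis unfolding GLinf_def using G H finitary_mm 1 2 by blast
qed

lemma minv_idm: "minv idm = idm"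
proof -
  have "mm idm (minv idm) = idm" using GLinfD[OF idm_GLinf] by simp
  thus ?thesis by simp
qed

lemma finitary_vbnd_mv: "finitary M \<Longrightarrow> fsupp v \<Longrightarrow> fsupp (mv M v)"
proof -
  assume "finitary M" "fsupp v"
  then obtain a b where "bnd a M" "vbnd b v" unfolding finitary_bnd fsupp_vbnd by blast
  hence "bnd (max a b) M" "vbnd (max a b) v" by (auto intro: bnd_mono vbnd_mono)
  thus ?thesis unfolding fsupp_vbnd using mv_vbnd by blast
qed

lemma fsupp_add: "fsupp v \<Longrightarrow> fsupp w \<Longrightarrow> fsupp (\<lambda>i. v i + w i)"
  unfolding fsupp_def by (rule finite_subset[of _ "{i. v i \<noteq> 0} \<union> {i. w i \<noteq> 0}"]) auto

lemma fsupp_uminus: "fsupp v \<Longrightarrow> fsupp (\<lambda>i. - v i)"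
  unfolding fsupp_def by simp

lemma fsupp_zero: "fsupp (\<lambda>_. 0)"
  unfolding fsupp_def by simp

lemma common_fv: "finitary M \<Longrightarrow> fsupp v \<Longrightarrow> fsupp w \<Longrightarrow> \<exists>n. bnd n M \<and> vbnd n v \<and> vbnd n w"
proof -
  assume "finitary M" "fsupp v" "fsupp w"
  then obtain a b c where "bnd a M" "vbnd b v" "vbnd c w" unfolding finitary_bnd fsupp_vbnd by blast
  hence "bnd (max a (max b c)) M \<and> vbnd (max a (max b c)) v \<and> vbnd (max a (max b c)) w"
    by (meson bnd_mono vbnd_mono max.cobounded1 max.cobounded2 order_trans)
  thus ?thesis by blast
qed

lemma mv_add_f: "finitary M \<Longrightarrow> fsupp v \<Longrightarrow> fsupp w \<Longrightarrow> mv M (\<lambda>i. v i + w i) = (\<lambda>i. mv M v i + mv M w i)"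
  using common_fv mv_add by metis

lemma mv_mm_f:
  assumes "finitary A" "finitary B" "fsupp v"
  shows "mv (mm A B) v = mv A (mv B v)"
proof -
  obtain n where "bnd n A" "bnd n B" using bnd_common2[OF assms(1,2)] by blast
  moreover obtain k where "vbnd k v" using assms(3) fsupp_vbnd by blast
  ultimately have "bnd (max n k) A" "bnd (max n k) B" "vbnd (max n k) v" by (auto intro: bnd_mono vbnd_mono)
  thus ?thesis by (rule mv_mm)
qed

lemma mv_idm_f: "fsupp v \<Longrightarrow> mv idm v = v"
  using fsupp_vbnd mv_idm by metis

lemma mv_uminus:
  assumes "finitary M" "fsupp v"
  shows "mv M (\<lambda>i. - v i) = (\<lambda>i. - mv M v i)"
  by (simp add: mv_def)

section \<open>The group\<close>

definition gM :: "grp \<Rightarrow> mat2" where "gM x = fst (Rep_grp x)"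
definition gV :: "grp \<Rightarrow> vec2" where "gV x = snd (Rep_grp x)"

lemma gM_GL: "gM x \<in> GLinf" and gV_fsupp: "fsupp (gV x)"
  using Rep_grp[of x] by (auto simp: gM_def gV_def)

lemma gM_fin: "finitary (gM x)"
  using GLinfD(1)[OF gM_GL] .

lemma grp_eqI: "gM x = gM y \<Longrightarrow> gV x = gV y \<Longrightarrow> x = y"
  by (metis Rep_grp_inject gM_def gV_def prod.collapse)

lemma Abs_grp_sel:
  assumes "g \<in> GLinf" "fsupp v"
  shows "gM (Abs_grp (g, v)) = g" "gV (Abs_grp (g, v)) = v"
  using Abs_grp_inverse[of "(g, v)"] assms by (auto simp: gM_def gV_def)

lemma gmul_eq: "gmul x y = Abs_grp (mm (gM x) (gM y), \<lambda>i. gV x i + mv (gM x) (gV y) i)"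
  unfolding gmul_def gM_def gV_def by (simp add: case_prod_beta)

lemma gM_mul: "gM (gmul x y) = mm (gM x) (gM y)"
  and gV_mul: "gV (gmul x y) = (\<lambda>i. gV x i + mv (gM x) (gV y) i)"
proof -
  have "mm (gM x) (gM y) \<in> GLinf" by (rule mm_GLinf[OF gM_GL gM_GL])
  moreover have "fsupp (\<lambda>i. gV x i + mv (gM x) (gV y) i)"
    by (rule fsupp_add[OF gV_fsupp finitary_vbnd_mv[OF gM_fin gV_fsupp]])
  ultimately show "gM (gmul x y) = mm (gM x) (gM y)" "gV (gmul x y) = (\<lambda>i. gV x i + mv (gM x) (gV y) i)"
    unfolding gmul_eq by (simp_all add: Abs_grp_sel)
qed

lemma gM_one: "gM gone = idm" and gV_one: "gV gone = (\<lambda>_. 0)"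
  unfolding gone_def by (simp_all add: Abs_grp_sel idm_GLinf fsupp_zero)

lemma ginv_eq: "ginv x = Abs_grp (minv (gM x), \<lambda>i. - mv (minv (gM x)) (gV x) i)"
  unfolding ginv_def gM_def gV_def by (simp add: case_prod_beta)

lemma gM_inv: "gM (ginv x) = minv (gM x)"
  and gV_inv: "gV (ginv x) = (\<lambda>i. - mv (minv (gM x)) (gV x) i)"
proof -
  have "minv (gM x) \<in> GLinf" by (rule minv_GLinf[OF gM_GL])
  moreover have "fsupp (\<lambda>i. - mv (minv (gM x)) (gV x) i)"
    by (rule fsupp_uminus[OF finitary_vbnd_mv[OF GLinfD(2)[OF gM_GL] gV_fsupp]])
  ultimately show "gM (ginv x) = minv (gM x)" "gV (ginv x) = (\<lambda>i. - mv (minv (gM x)) (gV x) i)"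
    unfolding ginv_eq by (simp_all add: Abs_grp_sel)
qed

lemma gmul_assoc: "gmul (gmul x y) z = gmul x (gmul y z)"
proof (rule grp_eqI)
  show "gM (gmul (gmul x y) z) = gM (gmul x (gmul y z))"
    by (simp add: gM_mul mm_assoc_f gM_fin)
  have fy: "fsupp (mv (gM y) (gV z))" by (rule finitary_vbnd_mv[OF gM_fin gV_fsupp])
  show "gV (gmul (gmul x y) z) = gV (gmul x (gmul y z))"
    by (simp add: gV_mul gM_mul mv_add_f[OF gM_fin gV_fsupp fy] mv_mm_f[OF gM_fin gM_fin gV_fsupp] add.assoc)
qed

lemma gmul_one_left: "gmul gone x = x"
  by (rule grp_eqI) (simp_all add: gM_mul gV_mul gM_one gV_one mv_idm_f gV_fsupp)

lemma gmul_one_right: "gmul x gone = x"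
  by (rule grp_eqI) (simp_all add: gM_mul gV_mul gM_one gV_one mm_idm_right_f gM_fin)

lemma gmul_inv_left: "gmul (ginv x) x = gone"
  by (rule grp_eqI) (simp_all add: gM_mul gV_mul gM_one gV_one gM_inv gV_inv GLinfD[OF gM_GL])

lemma gmul_inv_right: "gmul x (ginv x) = gone"
proof (rule grp_eqI)
  show "gM (gmul x (ginv x)) = gM gone" by (simp add: gM_mul gM_inv gM_one GLinfD[OF gM_GL])
  have "mv (gM x) (\<lambda>i. - mv (minv (gM x)) (gV x) i) = (\<lambda>i. - mv (gM x) (mv (minv (gM x)) (gV x)) i)"
    by (rule mv_uminus[OF gM_fin finitary_vbnd_mv[OF GLinfD(2)[OF gM_GL] gV_fsupp]])
  also have "mv (gM x) (mv (minv (gM x)) (gV x)) = mv (mm (gM x) (minv (gM x))) (gV x)"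
    by (rule mv_mm_f[symmetric, OF gM_fin GLinfD(2)[OF gM_GL] gV_fsupp])
  also have "\<dots> = gV x" by (simp add: GLinfD[OF gM_GL] mv_idm_f gV_fsupp)
  finally show "gV (gmul x (ginv x)) = gV gone" by (simp add: gV_mul gV_inv gV_one)
qed

lemma gmul_cancel1: "gmul (ginv a) (gmul a x) = x"
  by (simp add: gmul_assoc[symmetric] gmul_inv_left gmul_one_left)

lemma gmul_cancel2: "gmul a (gmul (ginv a) x) = x"
  by (simp add: gmul_assoc[symmetric] gmul_inv_right gmul_one_left)

lemma ginv_ginv: "ginv (ginv x) = x"
proof -
  have "ginv (ginv x) = gmul (ginv (ginv x)) gone" by (simp add: gmul_one_right)
  also have "\<dots> = gmul (ginv (ginv x)) (gmul (ginv x) x)" by (simp add: gmul_inv_left)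
  also have "\<dots> = x" by (rule gmul_cancel1)
  finally show ?thesis .
qed

lemma ginv_mul: "ginv (gmul a b) = gmul (ginv b) (ginv a)"
proof -
  have "ginv (gmul a b) = gmul (ginv (gmul a b)) (gmul (gmul a b) (gmul (ginv b) (ginv a)))"
    by (simp add: gmul_assoc gmul_cancel2 gmul_inv_right gmul_one_right)
  also have "\<dots> = gmul (ginv b) (ginv a)" by (rule gmul_cancel1)
  finally show ?thesis .
qed

lemma gM_vec: "fsupp v \<Longrightarrow> gM (vecG v) = idm" and gV_vec: "fsupp v \<Longrightarrow> gV (vecG v) = v"
  unfolding vecG_def by (simp_all add: Abs_grp_sel idm_GLinf)

lemma gM_mat: "g \<in> GLinf \<Longrightarrow> gM (matG g) = g" and gV_mat: "g \<in> GLinf \<Longrightarrow> gV (matG g) = (\<lambda>_. 0)"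
  unfolding matG_def by (simp_all add: Abs_grp_sel fsupp_zero)

lemma vec_mul: "fsupp a \<Longrightarrow> fsupp b \<Longrightarrow> gmul (vecG a) (vecG b) = vecG (\<lambda>i. a i + b i)"
  by (rule grp_eqI) (simp_all add: gM_mul gV_mul gM_vec gV_vec fsupp_add mv_idm_f)

lemma mat_mul: "g \<in> GLinf \<Longrightarrow> h \<in> GLinf \<Longrightarrow> gmul (matG g) (matG h) = matG (mm g h)"
  by (rule grp_eqI) (simp_all add: gM_mul gV_mul gM_mat gV_mat mm_GLinf)

lemma mat_vec: "g \<in> GLinf \<Longrightarrow> fsupp v \<Longrightarrow> gmul (matG g) (vecG v) = gmul (vecG (mv g v)) (matG g)"
  by (rule grp_eqI)
     (simp_all add: gM_mul gV_mul gM_mat gV_mat gM_vec gV_vec finitary_vbnd_mv GLinfD(1) mm_idm_right_f)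

lemma ginv_vec: "fsupp v \<Longrightarrow> ginv (vecG v) = vecG v"
  by (rule grp_eqI) (simp_all add: gM_inv gV_inv gM_vec gV_vec minv_idm mv_idm_f)

lemma ginv_mat: "g \<in> GLinf \<Longrightarrow> ginv (matG g) = matG (minv g)"
  by (rule grp_eqI) (simp_all add: gM_inv gV_inv gM_mat gV_mat minv_GLinf)

lemma grp_decomp: "x = gmul (vecG (gV x)) (matG (gM x))"
  by (rule grp_eqI) (simp_all add: gM_mul gV_mul gM_mat gV_mat gM_vec gV_vec gV_fsupp gM_GL)

lemma Vsub_iff: "x \<in> Vsub \<longleftrightarrow> gM x = idm"
proof
  assume "x \<in> Vsub" thus "gM x = idm" by (auto simp: Vsub_def gM_vec)
next
  assume "gM x = idm"
  hence "x = vecG (gV x)" by (intro grp_eqI) (simp_all add: gM_vec gV_vec gV_fsupp)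
  thus "x \<in> Vsub" unfolding Vsub_def using gV_fsupp by blast
qed

lemma gone_Vsub: "gone \<in> Vsub"
  by (simp add: Vsub_iff gM_one)


lemma bij_gmul: "bij_betw (gmul a) UNIV UNIV"
  by (rule bij_betwI[where g="gmul (ginv a)"]) (auto simp: gmul_cancel1 gmul_cancel2)

lemma l2_shift: "\<xi> \<in> l2 \<Longrightarrow> (\<lambda>h. \<xi> (gmul a h)) \<in> l2"
  unfolding l2_iff using summable_on_reindex_bij_betw[OF bij_gmul, of "\<lambda>h. (cmod (\<xi> h))\<^sup>2" a] by simp

lemma nrm2_shift: "nrm2 (\<lambda>h. \<xi> (gmul a h)) = nrm2 \<xi>"
  unfolding nrm2_def using infsum_reindex_bij_betw[OF bij_gmul, of "\<lambda>h. (cmod (\<xi> h))\<^sup>2" a] by simp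

lemma uop_l2: "\<xi> \<in> l2 \<Longrightarrow> uop a \<xi> = (\<lambda>h. \<xi> (gmul (ginv a) h))"
  by (simp add: uop_def)

lemma uop_out: "\<xi> \<notin> l2 \<Longrightarrow> uop a \<xi> = (\<lambda>_. 0)"
  by (simp add: uop_def)

lemma uop_bop: "bop (uop a)"
proof (rule bopI[where C=1])
  fix \<xi> assume x: "\<xi> \<in> l2"
  show "uop a \<xi> \<in> l2" using x by (simp add: uop_l2 l2_shift)
  show "lnorm (uop a \<xi>) \<le> 1 * lnorm \<xi>" using x by (simp add: uop_l2 lnorm_nrm2 nrm2_shift)
next
  fix \<xi> \<eta> :: vect and c d :: complex assume x: "\<xi> \<in> l2" "\<eta> \<in> l2"
  show "uop a (\<lambda>x. c * \<xi> x + d * \<eta> x) = (\<lambda>x. c * uop a \<xi> x + d * uop a \<eta> x)"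
    using x by (simp add: uop_l2 l2_lin)
next
  fix \<xi> :: vect assume "\<xi> \<notin> l2" thus "uop a \<xi> = (\<lambda>_. 0)" by (rule uop_out)
qed

lemma uop_mul: "uop (gmul a b) = uop a \<circ> uop b"
proof
  fix \<xi>
  show "uop (gmul a b) \<xi> = (uop a \<circ> uop b) \<xi>"
  proof (cases "\<xi> \<in> l2")
    case True
    have "uop b \<xi> \<in> l2" using True by (simp add: uop_l2 l2_shift)
    thus ?thesis using True by (simp add: uop_l2 ginv_mul gmul_assoc)
  next
    case False
    thus ?thesis by (simp add: uop_def)
  qed
qed

lemma uop_one: "uop gone = Jop"
proof
  fix \<xi>
  have gi: "ginv gone = gone" by (metis gmul_inv_left gmul_one_right)
  show "uop gone \<xi> = Jop \<xi>"
    by (cases "\<xi> \<in> l2") (simp_all add: uop_l2 uop_out Jop_def gi gmul_one_left)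
qed

lemma uop_inv_right: "uop a \<circ> uop (ginv a) = Jop"
  by (simp flip: uop_mul add: gmul_inv_right uop_one)

lemma uop_inv_left: "uop (ginv a) \<circ> uop a = Jop"
  by (simp flip: uop_mul add: gmul_inv_left uop_one)

lemma adj_uop: "adj (uop a) = uop (ginv a)"
proof (rule adj_eq[OF uop_bop uop_bop])
  show "\<forall>\<xi>\<in>l2. \<forall>\<eta>\<in>l2. linner (uop a \<xi>) \<eta> = linner \<xi> (uop (ginv a) \<eta>)"
  proof (intro ballI)
    fix \<xi> \<eta> assume x: "\<xi> \<in> l2" "\<eta> \<in> l2"
    have "linner \<xi> (uop (ginv a) \<eta>) = infsum (\<lambda>k. cnj (\<xi> k) * \<eta> (gmul a k)) UNIV"
      using x by (simp add: linner_def uop_l2 ginv_ginv)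
    also have "\<dots> = infsum (\<lambda>k. (\<lambda>h. cnj (\<xi> (gmul (ginv a) h)) * \<eta> h) (gmul a k)) UNIV"
      by (simp add: gmul_cancel1)
    also have "\<dots> = infsum (\<lambda>h. cnj (\<xi> (gmul (ginv a) h)) * \<eta> h) UNIV"
      by (rule infsum_reindex_bij_betw[OF bij_gmul])
    also have "\<dots> = linner (uop a \<xi>) \<eta>" using x by (simp add: linner_def uop_l2)
    finally show "linner (uop a \<xi>) \<eta> = linner \<xi> (uop (ginv a) \<eta>)" by simp
  qed
qed

lemma uop_delta: "uop a (delta b) = delta (gmul a b)"
proof -
  have e: "\<And>h. (gmul (ginv a) h = b) = (h = gmul a b)" by (metis gmul_cancel1 gmul_cancel2)
  have "uop a (delta b) = (\<lambda>h. delta b (gmul (ginv a) h))" by (rule uop_l2[OF delta_l2])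
  thus ?thesis using e by (simp add: delta_def)
qed

lemma delta_inj: "delta a = delta b \<Longrightarrow> a = b"
  unfolding delta_def by (metis one_neq_zero)

lemma uop_inj: "uop a = uop b \<Longrightarrow> a = b"
proof -
  assume "uop a = uop b"
  hence "uop a (delta gone) = uop b (delta gone)" by simp
  thus "a = b" by (simp add: uop_delta gmul_one_right delta_inj)
qed

lemma uop_conj_Jop:
  assumes "bop T"
  shows "uop a \<circ> (uop (ginv a) \<circ> T) = T" "(T \<circ> uop a) \<circ> uop (ginv a) = T"
proof -
  show "uop a \<circ> (uop (ginv a) \<circ> T) = T"
    by (simp add: comp_assoc[symmetric] uop_inv_right bop_J_left assms)
  show "(T \<circ> uop a) \<circ> uop (ginv a) = T"
    by (simp add: comp_assoc uop_inv_right bop_J_right assms)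
qed


declare add_bit_eq_xor[simp del] mult_bit_eq_and[simp del]

section \<open>The range R(g - I)\<close>

lemma vbnd_finite: "finite {w. vbnd n w}"
proof -
  have "{w. vbnd n w} \<subseteq> (\<lambda>S. \<lambda>j. if j \<in> S then 1 else 0) ` Pow {..<n}"
  proof
    fix w assume w: "w \<in> {w. vbnd n w}"
    have "w = (\<lambda>j. if j \<in> {j. w j \<noteq> 0} then 1 else 0)"
      using bit_cases by (auto simp: fun_eq_iff)
    moreover have "{j. w j \<noteq> 0} \<in> Pow {..<n}" using w by (auto simp: vbnd_def not_le[symmetric])
    ultimately show "w \<in> (\<lambda>S. \<lambda>j. if j \<in> S then 1 else 0) ` Pow {..<n}" by blast
  qed
  thus ?thesis by (rule finite_subset) simp
qed

lemma Rng_sub: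
  assumes "bnd n g"
  shows "Rng g \<subseteq> {w. vbnd n w}"
proof
  fix w assume "w \<in> Rng g"
  then obtain v where v: "fsupp v" "w = (\<lambda>i. mv g v i - v i)" by (auto simp: Rng_def)
  obtain k where k: "vbnd k v" using v(1) fsupp_vbnd by blast
  show "w \<in> {w. vbnd n w}" unfolding vbnd_def
  proof (intro CollectI allI impI)
    fix i assume i: "n \<le> i"
    define m where "m = max k (Suc i)"
    have m: "k \<le> m" "i < m" by (auto simp: m_def)
    have "mv g v i = (\<Sum>j<m. g i j * v j)" by (rule mv_lt[OF k m(1)])
    also have "\<dots> = (\<Sum>j<m. idm i j * v j)" using assms i by (auto simp: bnd_def intro!: sum.cong)
    also have "\<dots> = v i" by (rule sum_idm_left[OF m(2)])
    finally show "w i = 0" using v(2) by (simp add: bit_minus)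
  qed
qed

lemma Rng_finite: "g \<in> GLinf \<Longrightarrow> finite (Rng g)"
  using GLinfD(1) finitary_bnd Rng_sub vbnd_finite finite_subset by metis

lemma Rng_fsupp: "g \<in> GLinf \<Longrightarrow> w \<in> Rng g \<Longrightarrow> fsupp w"
  unfolding Rng_def using fsupp_add[OF finitary_vbnd_mv[OF GLinfD(1)]] by (auto simp: bit_minus)

lemma Rng_zero: "(\<lambda>_. 0) \<in> Rng g"
  unfolding Rng_def by (auto intro!: exI[of _ "\<lambda>_. 0"] simp: fsupp_zero)

lemma Rng_add:
  assumes g: "g \<in> GLinf" and a: "a \<in> Rng g" and b: "b \<in> Rng g"
  shows "(\<lambda>i. a i + b i) \<in> Rng g"
proof -
  obtain u where u: "fsupp u" "a = (\<lambda>i. mv g u i - u i)" using a by (auto simp: Rng_def)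
  obtain v where v: "fsupp v" "b = (\<lambda>i. mv g v i - v i)" using b by (auto simp: Rng_def)
  have "mv g (\<lambda>i. u i + v i) = (\<lambda>i. mv g u i + mv g v i)" by (rule mv_add_f[OF GLinfD(1)[OF g] u(1) v(1)])
  hence "(\<lambda>i. a i + b i) = (\<lambda>i. mv g (\<lambda>i. u i + v i) i - (u i + v i))"
    using u v by (simp add: bit_minus algebra_simps)
  thus ?thesis unfolding Rng_def using fsupp_add[OF u(1) v(1)] by blast
qed

lemma Rng_shift:
  assumes g: "g \<in> GLinf" and w: "fsupp w"
  shows "(\<lambda>i. w i + mv (minv g) w i) \<in> Rng g"
proof -
  define u where "u = mv (minv g) w"
  have u: "fsupp u" unfolding u_def by (rule finitary_vbnd_mv[OF GLinfD(2)[OF g] w])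
  have "mv g u = mv (mm g (minv g)) w" unfolding u_def by (rule mv_mm_f[symmetric, OF GLinfD(1,2)[OF g] w])
  also have "\<dots> = w" by (simp add: GLinfD[OF g] mv_idm_f w)
  finally have "(\<lambda>i. w i + mv (minv g) w i) = (\<lambda>i. mv g u i - u i)" by (simp add: u_def bit_minus)
  thus ?thesis unfolding Rng_def using u by blast
qed

section \<open>The operators f_g\<close>

definition cR :: "mat2 \<Rightarrow> complex" where "cR g = 1 / of_nat (card (Rng g))"

lemma fop_sum: "fop g = (\<lambda>\<xi> x. \<Sum>v\<in>Rng g. cR g * uop (vecG v) \<xi> x)"
  unfolding fop_def cR_def by (simp add: sum_distrib_left)

lemma fop_bop: "g \<in> GLinf \<Longrightarrow> bop (fop g)"
  unfolding fop_sum by (rule bop_sum_op[OF Rng_finite]) (simp_all add: uop_bop)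

lemma fop_l2:
  assumes "g \<in> GLinf" "\<xi> \<in> l2"
  shows "fop g \<xi> = (\<lambda>h. \<Sum>v\<in>Rng g. cR g * \<xi> (gmul (vecG v) h))"
proof -
  have "\<And>v. v \<in> Rng g \<Longrightarrow> uop (vecG v) \<xi> = (\<lambda>h. \<xi> (gmul (vecG v) h))"
    using assms by (simp add: uop_l2 ginv_vec Rng_fsupp)
  thus ?thesis unfolding fop_sum by (auto intro!: sum.cong)
qed

definition ufop :: "mat2 \<Rightarrow> oper" where "ufop g = uop (matG g) \<circ> fop g"

lemma ufop_bop: "g \<in> GLinf \<Longrightarrow> bop (ufop g)"
  unfolding ufop_def by (rule bop_comp[OF uop_bop fop_bop])

lemma ufop_l2:
  assumes g: "g \<in> GLinf" and x: "\<xi> \<in> l2"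
  shows "ufop g \<xi> = (\<lambda>h. \<Sum>v\<in>Rng g. cR g * \<xi> (gmul (vecG v) (gmul (matG (minv g)) h)))"
proof -
  have "fop g \<xi> \<in> l2" by (rule bop_l2[OF fop_bop[OF g] x])
  thus ?thesis unfolding ufop_def using g x by (simp add: uop_l2 fop_l2 ginv_mat)
qed

lemma ufop_comm_vec:
  assumes g: "g \<in> GLinf" and w: "fsupp w"
  shows "ufop g \<circ> uop (vecG w) = uop (vecG w) \<circ> ufop g"
proof
  fix \<xi>
  show "(ufop g \<circ> uop (vecG w)) \<xi> = (uop (vecG w) \<circ> ufop g) \<xi>"
  proof (cases "\<xi> \<in> l2")
    case False
    have "uop (vecG w) \<xi> = (\<lambda>_. 0)" using False by (rule uop_out)
    moreover have "ufop g \<xi> = (\<lambda>_. 0)" using False ufop_bop[OF g] by (simp add: bop_out)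
    ultimately show ?thesis using ufop_bop[OF g] uop_bop by (simp add: bop_zero)
  next
    case True
    define g' where "g' = minv g"
    have g': "g' \<in> GLinf" unfolding g'_def by (rule minv_GLinf[OF g])
    define d where "d = (\<lambda>i. w i + mv g' w i)"
    have d: "d \<in> Rng g" unfolding d_def g'_def by (rule Rng_shift[OF g w])
    have mw: "fsupp (mv g' w)" by (rule finitary_vbnd_mv[OF GLinfD(1)[OF g'] w])
    have l1: "uop (vecG w) \<xi> \<in> l2" by (rule bop_l2[OF uop_bop True])
    have l2': "ufop g \<xi> \<in> l2" by (rule bop_l2[OF ufop_bop[OF g] True])
    have LHS: "(ufop g \<circ> uop (vecG w)) \<xi> = (\<lambda>h. \<Sum>v\<in>Rng g. cR g * \<xi> (gmul (vecG (\<lambda>i. w i + v i)) (gmul (matG g') h)))"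
    proof -
      have "(ufop g \<circ> uop (vecG w)) \<xi> = (\<lambda>h. \<Sum>v\<in>Rng g. cR g * uop (vecG w) \<xi> (gmul (vecG v) (gmul (matG g') h)))"
        using ufop_l2[OF g l1] by (simp add: g'_def)
      also have "\<dots> = (\<lambda>h. \<Sum>v\<in>Rng g. cR g * \<xi> (gmul (vecG (\<lambda>i. w i + v i)) (gmul (matG g') h)))"
      proof (intro ext sum.cong refl)
        fix h v assume v: "v \<in> Rng g"
        have "uop (vecG w) \<xi> (gmul (vecG v) (gmul (matG g') h)) = \<xi> (gmul (vecG w) (gmul (vecG v) (gmul (matG g') h)))"
          using True w by (simp add: uop_l2 ginv_vec)
        also have "\<dots> = \<xi> (gmul (vecG (\<lambda>i. w i + v i)) (gmul (matG g') h))"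
          by (simp add: gmul_assoc[symmetric] vec_mul w Rng_fsupp[OF g v])
        finally show "cR g * uop (vecG w) \<xi> (gmul (vecG v) (gmul (matG g') h)) = cR g * \<xi> (gmul (vecG (\<lambda>i. w i + v i)) (gmul (matG g') h))"
          by simp
      qed
      finally show ?thesis .
    qed
    have RHS: "(uop (vecG w) \<circ> ufop g) \<xi> = (\<lambda>h. \<Sum>v\<in>Rng g. cR g * \<xi> (gmul (vecG (\<lambda>i. v i + mv g' w i)) (gmul (matG g') h)))"
    proof -
      have "(uop (vecG w) \<circ> ufop g) \<xi> = (\<lambda>h. ufop g \<xi> (gmul (vecG w) h))"
        using l2' w by (simp add: uop_l2 ginv_vec)
      also have "\<dots> = (\<lambda>h. \<Sum>v\<in>Rng g. cR g * \<xi> (gmul (vecG v) (gmul (matG g') (gmul (vecG w) h))))"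
        using ufop_l2[OF g True] by (simp add: g'_def)
      also have "\<dots> = (\<lambda>h. \<Sum>v\<in>Rng g. cR g * \<xi> (gmul (vecG (\<lambda>i. v i + mv g' w i)) (gmul (matG g') h)))"
      proof (intro ext sum.cong refl)
        fix h v assume v: "v \<in> Rng g"
        have "gmul (matG g') (gmul (vecG w) h) = gmul (vecG (mv g' w)) (gmul (matG g') h)"
          by (simp add: gmul_assoc[symmetric] mat_vec[OF g' w])
        hence "gmul (vecG v) (gmul (matG g') (gmul (vecG w) h)) = gmul (vecG (\<lambda>i. v i + mv g' w i)) (gmul (matG g') h)"
          by (simp add: gmul_assoc[symmetric] vec_mul Rng_fsupp[OF g v] mw)
        thus "cR g * \<xi> (gmul (vecG v) (gmul (matG g') (gmul (vecG w) h))) = cR g * \<xi> (gmul (vecG (\<lambda>i. v i + mv g' w i)) (gmul (matG g') h))"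
          by simp
      qed
      finally show ?thesis .
    qed
    have reidx: "(\<Sum>v\<in>Rng g. F (\<lambda>i. w i + v i)) = (\<Sum>v\<in>Rng g. F (\<lambda>i. v i + mv g' w i))" for F :: "vec2 \<Rightarrow> complex"
    proof (rule sum.reindex_bij_witness[where i="\<lambda>v. (\<lambda>i. v i + d i)" and j="\<lambda>v. (\<lambda>i. v i + d i)"])
      fix v assume v: "v \<in> Rng g"
      show "(\<lambda>i. (v i + d i) + d i) = v" by (simp add: fun_eq_iff add.assoc)
      show "(\<lambda>i. v i + d i) \<in> Rng g" by (rule Rng_add[OF g v d])
      show "F (\<lambda>i. (\<lambda>i. v i + d i) i + mv g' w i) = F (\<lambda>i. w i + v i)"
        by (rule arg_cong[where f=F]) (simp add: fun_eq_iff d_def add.assoc add.commute add.left_commute)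
    qed (simp_all add: fun_eq_iff add.assoc Rng_add[OF g _ d])
    show ?thesis unfolding LHS RHS by (rule ext) (rule reidx)
  qed
qed


declare add_bit_eq_xor[simp del] mult_bit_eq_and[simp del]

definition XV :: "oper set" where "XV = uop ` Vsub"

definition S0 :: "oper set" where
  "S0 = LG Vsub \<union> {uop (matG g) \<circ> fop g | g. g \<in> GLinf}"

lemma Mexo_S0: "Mexo = vNgen S0"
  by (simp add: Mexo_def S0_def)

lemma LG_XV: "LG Vsub = vNgen XV"
  by (simp add: LG_def XV_def)

lemma Vsub_comm: "a \<in> Vsub \<Longrightarrow> b \<in> Vsub \<Longrightarrow> gmul a b = gmul b a"
  unfolding Vsub_def by (auto simp: vec_mul add.commute)

lemma ginv_Vsub: "a \<in> Vsub \<Longrightarrow> ginv a = a"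
  unfolding Vsub_def by (auto simp: ginv_vec)

lemma XV_bop: "XV \<subseteq> Collect bop"
  by (auto simp: XV_def uop_bop)

lemma adj_XV: "adj ` XV = XV"
  by (auto simp: XV_def adj_uop ginv_Vsub image_iff)

lemma uop_comm_V: "a \<in> Vsub \<Longrightarrow> b \<in> Vsub \<Longrightarrow> uop a \<circ> uop b = uop b \<circ> uop a"
  by (simp flip: uop_mul add: Vsub_comm)

lemma XV_comm_self: "XV \<subseteq> comm (XV \<union> adj ` XV)"
  unfolding adj_XV by (auto simp: XV_def intro!: commI uop_bop uop_comm_V)

lemma LGV_comm: "LG Vsub \<subseteq> comm XV"
proof -
  have "comm (comm (XV \<union> adj ` XV)) \<subseteq> comm XV" by (rule comm_anti[OF XV_comm_self])
  thus ?thesis by (simp add: LG_XV vNgen_def)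
qed

lemma ufop_eq: "{uop (matG g) \<circ> fop g | g. g \<in> GLinf} = ufop ` GLinf"
  by (auto simp: ufop_def)

lemma S0_bop: "S0 \<subseteq> Collect bop"
  unfolding S0_def ufop_eq using vNgen_bop[of XV] by (auto simp: LG_XV ufop_bop)

lemma adj_comm_uop:
  assumes T: "bop T" and c1: "T \<circ> uop a = uop a \<circ> T" and c2: "T \<circ> uop (ginv a) = uop (ginv a) \<circ> T"
  shows "adj T \<circ> uop a = uop a \<circ> adj T"
proof -
  have "adj T \<circ> uop a = adj (adj (uop a) \<circ> T)" by (simp add: adj_comp T uop_bop adj_bop adj_adj)
  also have "adj (uop a) \<circ> T = T \<circ> adj (uop a)" by (simp add: adj_uop c2)
  also have "adj (T \<circ> adj (uop a)) = uop a \<circ> adj T" by (simp add: adj_comp T uop_bop adj_bop adj_adj)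
  finally show ?thesis .
qed

lemma XV_comm_S0: "XV \<subseteq> comm (S0 \<union> adj ` S0)"
proof
  fix U assume "U \<in> XV"
  then obtain a where a: "a \<in> Vsub" "U = uop a" by (auto simp: XV_def)
  have base: "T \<circ> uop b = uop b \<circ> T" if T: "T \<in> S0" and b: "b \<in> Vsub" for T b
  proof -
    show ?thesis
    proof (cases "T \<in> LG Vsub")
      case True
      have "uop b \<in> XV" using b by (simp add: XV_def)
      thus ?thesis using commD[OF subsetD[OF LGV_comm True]] by blast
    next
      case False
      then obtain g where g: "g \<in> GLinf" "T = ufop g" using T unfolding S0_def ufop_eq by blast
      obtain w where w: "fsupp w" "b = vecG w" using b by (auto simp: Vsub_def)
      show ?thesis using ufop_comm_vec[OF g(1) w(1)] g w by simp
    qed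
  qed
  show "U \<in> comm (S0 \<union> adj ` S0)"
  proof (rule commI)
    show "bop U" using a by (simp add: uop_bop)
    fix A assume A: "A \<in> S0 \<union> adj ` S0"
    show "U \<circ> A = A \<circ> U"
    proof (cases "A \<in> S0")
      case True
      thus ?thesis using base[OF True a(1)] a by simp
    next
      case False
      then obtain T where T: "T \<in> S0" "A = adj T" using A by blast
      have Tb: "bop T" using T S0_bop by blast
      have "adj T \<circ> uop a = uop a \<circ> adj T"
        by (rule adj_comm_uop[OF Tb base[OF T(1) a(1)]]) (simp add: base[OF T(1)] ginv_Vsub a(1))
      thus ?thesis using T a by simp
    qed
  qed
qed

lemma Mexo_comm_XV: "Mexo \<subseteq> comm XV"
  unfolding Mexo_S0 vNgen_def by (rule comm_anti[OF XV_comm_S0])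

lemma Mexo_vNa: "is_vNa Mexo"
  unfolding Mexo_S0 by (rule is_vNa_vNgen[OF S0_bop])

lemma LG_vNa: "is_vNa (LG N)"
  unfolding LG_def by (rule is_vNa_vNgen) (auto simp: uop_bop)

lemma uop_in_LG: "a \<in> N \<Longrightarrow> uop a \<in> LG N"
proof -
  assume a: "a \<in> N"
  have "uop ` N \<subseteq> Collect bop" by (auto simp: uop_bop)
  hence "uop ` N \<subseteq> vNgen (uop ` N)" by (rule vNgen_sub)
  thus ?thesis using a unfolding LG_def by blast
qed

lemma fop_LG: "g \<in> GLinf \<Longrightarrow> fop g \<in> LG UNIV"
  unfolding fop_sum by (rule vNa_sum[OF LG_vNa Rng_finite]) (simp_all add: uop_in_LG)

lemma ufop_LG: "g \<in> GLinf \<Longrightarrow> ufop g \<in> LG UNIV"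
  unfolding ufop_def by (rule vNa_comp[OF LG_vNa uop_in_LG fop_LG]) simp_all

lemma Mexo_LG: "Mexo \<subseteq> LG UNIV"
  unfolding Mexo_S0
proof (rule vNa_least[OF LG_vNa])
  have "LG Vsub \<subseteq> LG UNIV" unfolding LG_def by (rule vNgen_mono) auto
  thus "S0 \<subseteq> LG UNIV" unfolding S0_def ufop_eq using ufop_LG by auto
qed


declare add_bit_eq_xor[simp del] mult_bit_eq_and[simp del]

section \<open>Conjugation invariance of generated algebras\<close>

lemma conj_vNgen:
  assumes S: "S \<subseteq> Collect bop"
    and H1: "\<And>A. A \<in> S \<union> adj ` S \<Longrightarrow> uop a \<circ> A \<circ> uop (ginv a) \<in> vNgen S"
    and H2: "\<And>A. A \<in> S \<union> adj ` S \<Longrightarrow> uop (ginv a) \<circ> A \<circ> uop a \<in> vNgen S"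
    and T: "T \<in> vNgen S"
  shows "uop a \<circ> T \<circ> uop (ginv a) \<in> vNgen S"
proof -
  define P where "P = uop a"
  define Q where "Q = uop (ginv a)"
  define Y where "Y = S \<union> adj ` S"
  have Pb: "bop P" and Qb: "bop Q" by (simp_all add: P_def Q_def uop_bop)
  have R1: "\<And>Z. bop Z \<Longrightarrow> P \<circ> (Q \<circ> Z) = Z"
    by (simp add: P_def Q_def comp_assoc[symmetric] uop_inv_right bop_J_left)
  have R2: "\<And>Z. bop Z \<Longrightarrow> Q \<circ> (P \<circ> Z) = Z"
    by (simp add: P_def Q_def comp_assoc[symmetric] uop_inv_left bop_J_left)
  have R3: "\<And>Z. bop Z \<Longrightarrow> Z \<circ> (P \<circ> Q) = Z"
    by (simp add: P_def Q_def uop_inv_right bop_J_right)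
  have R4: "\<And>Z. bop Z \<Longrightarrow> Z \<circ> (Q \<circ> P) = Z"
    by (simp add: P_def Q_def uop_inv_left bop_J_right)
  have Yb: "Y \<subseteq> Collect bop" unfolding Y_def by (rule gens_bop[OF S])
  have cM: "comm (vNgen S) = comm Y" unfolding Y_def by (rule vNgen_comm[OF S])
  have Tc: "T \<in> comm (comm Y)" using T by (simp add: vNgen_def Y_def)
  have Tb: "bop T" using T vNgen_bop by blast
  show ?thesis unfolding vNgen_def Y_def[symmetric] P_def[symmetric] Q_def[symmetric]
  proof (rule commI)
    show "bop (P \<circ> T \<circ> Q)" by (intro bop_comp Pb Qb Tb)
    fix B assume B: "B \<in> comm Y"
    have Bb: "bop B" using B comm_bop by blast
    define B' where "B' = Q \<circ> B \<circ> P"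
    have B'c: "B' \<in> comm Y"
    proof (rule commI)
      show "bop B'" unfolding B'_def by (intro bop_comp Pb Qb Bb)
      fix A assume A: "A \<in> Y"
      have Ab: "bop A" using A Yb by blast
      have "P \<circ> A \<circ> Q \<in> vNgen S" using H1[OF A[unfolded Y_def]] by (simp add: P_def Q_def)
      hence "B \<in> comm {P \<circ> A \<circ> Q}" using B cM[symmetric] by (auto simp: comm_def)
      hence Bc: "B \<circ> (P \<circ> A \<circ> Q) = (P \<circ> A \<circ> Q) \<circ> B" by (auto simp: comm_def)
      hence "Q \<circ> (B \<circ> (P \<circ> A \<circ> Q)) \<circ> P = Q \<circ> ((P \<circ> A \<circ> Q) \<circ> B) \<circ> P" by simp
      thus "B' \<circ> A = A \<circ> B'" unfolding B'_def
        by (simp add: comp_assoc R1 R2 R3 R4 Ab Bb Pb Qb bop_comp)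
    qed
    have "T \<circ> B' = B' \<circ> T" by (rule commD[OF Tc B'c])
    hence "P \<circ> (T \<circ> B') \<circ> Q = P \<circ> (B' \<circ> T) \<circ> Q" by simp
    thus "P \<circ> T \<circ> Q \<circ> B = B \<circ> (P \<circ> T \<circ> Q)" unfolding B'_def
      by (simp add: comp_assoc R1 R2 R3 R4 Tb Bb Pb Qb bop_comp)
  qed
qed

lemma uop_conj: "uop a \<circ> uop b \<circ> uop (ginv a) = uop (gmul a (gmul b (ginv a)))"
  by (simp add: uop_mul comp_assoc)

lemma Vsub_normal: "b \<in> Vsub \<Longrightarrow> gmul a (gmul b (ginv a)) \<in> Vsub"
  by (simp add: Vsub_iff gM_mul gM_inv mm_idm_left GLinfD[OF gM_GL])

lemma LGV_conj: "T \<in> LG Vsub \<Longrightarrow> uop a \<circ> T \<circ> uop (ginv a) \<in> LG Vsub"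
  unfolding LG_XV
proof (rule conj_vNgen[OF XV_bop])
  have sub: "XV \<subseteq> vNgen XV" by (rule vNgen_sub[OF XV_bop])
  show "uop a \<circ> A \<circ> uop (ginv a) \<in> vNgen XV" if "A \<in> XV \<union> adj ` XV" for A
  proof -
    have "A \<in> XV" using that adj_XV by auto
    then obtain b where b: "b \<in> Vsub" "A = uop b" by (auto simp: XV_def)
    have "uop a \<circ> A \<circ> uop (ginv a) \<in> XV" using b by (simp add: uop_conj XV_def Vsub_normal)
    thus ?thesis using sub by blast
  qed
  show "uop (ginv a) \<circ> A \<circ> uop a \<in> vNgen XV" if "A \<in> XV \<union> adj ` XV" for A
  proof -
    have "A \<in> XV" using that adj_XV by auto
    then obtain b where b: "b \<in> Vsub" "A = uop b" by (auto simp: XV_def)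
    have "uop (ginv a) \<circ> A \<circ> uop (ginv (ginv a)) \<in> XV" using b by (simp add: uop_conj XV_def Vsub_normal)
    thus ?thesis using sub by (simp add: ginv_ginv) blast
  qed
qed


declare add_bit_eq_xor[simp del] mult_bit_eq_and[simp del]

lemma gM_GLinf_mat: "g \<in> GLinf \<Longrightarrow> matG g = matG h \<Longrightarrow> h \<in> GLinf \<Longrightarrow> g = h"
  by (metis gM_mat)

lemma minv_minv: "k \<in> GLinf \<Longrightarrow> minv (minv k) = k"
proof -
  assume k: "k \<in> GLinf"
  have "matG (minv (minv k)) = matG k"
    using ginv_ginv[of "matG k"] by (simp add: ginv_mat k minv_GLinf)
  thus ?thesis using k minv_GLinf by (metis gM_mat)
qed

definition cj :: "mat2 \<Rightarrow> mat2 \<Rightarrow> mat2" where "cj k g = mm (mm k g) (minv k)"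

lemma cj_GLinf: "k \<in> GLinf \<Longrightarrow> g \<in> GLinf \<Longrightarrow> cj k g \<in> GLinf"
  unfolding cj_def by (intro mm_GLinf minv_GLinf)

lemma matG_cj: "k \<in> GLinf \<Longrightarrow> g \<in> GLinf \<Longrightarrow> matG (cj k g) = gmul (matG k) (gmul (matG g) (ginv (matG k)))"
  unfolding cj_def
  by (simp add: mat_mul ginv_mat minv_GLinf mm_GLinf mm_assoc_f[OF GLinfD(1) GLinfD(1) GLinfD(2)])

lemma ginv_matG_cj:
  assumes "k \<in> GLinf" "g \<in> GLinf"
  shows "matG (minv (cj k g)) = gmul (matG k) (gmul (ginv (matG g)) (ginv (matG k)))"
proof -
  have "matG (minv (cj k g)) = ginv (matG (cj k g))" by (simp add: ginv_mat cj_GLinf assms)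
  also have "\<dots> = gmul (matG k) (gmul (ginv (matG g)) (ginv (matG k)))"
    by (simp add: matG_cj assms ginv_mul ginv_ginv gmul_assoc)
  finally show ?thesis .
qed

lemma Rng_alt: "w \<in> Rng g \<longleftrightarrow> (\<exists>v. fsupp v \<and> w = (\<lambda>i. mv g v i + v i))"
  by (simp add: Rng_def bit_minus)

lemma mv_cj:
  assumes k: "k \<in> GLinf" and g: "g \<in> GLinf" and v: "fsupp v"
  shows "mv (cj k g) (mv k v) = mv k (mv g v)"
proof -
  note K = GLinfD[OF k] and Gf = GLinfD(1)[OF g]
  have kv: "fsupp (mv k v)" by (rule finitary_vbnd_mv[OF K(1) v])
  have "mv (cj k g) (mv k v) = mv (mm k g) (mv (minv k) (mv k v))"
    unfolding cj_def by (rule mv_mm_f[OF finitary_mm[OF K(1) Gf] K(2) kv])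
  also have "mv (minv k) (mv k v) = mv (mm (minv k) k) v" by (rule mv_mm_f[symmetric, OF K(2) K(1) v])
  also have "\<dots> = v" by (simp add: K mv_idm_f v)
  also have "mv (mm k g) v = mv k (mv g v)" by (rule mv_mm_f[OF K(1) Gf v])
  finally show ?thesis .
qed

lemma mv_inv_cancel:
  assumes k: "k \<in> GLinf" and u: "fsupp u"
  shows "mv k (mv (minv k) u) = u" "mv (minv k) (mv k u) = u"
proof -
  note K = GLinfD[OF k]
  have "mv k (mv (minv k) u) = mv (mm k (minv k)) u" by (rule mv_mm_f[symmetric, OF K(1) K(2) u])
  thus "mv k (mv (minv k) u) = u" by (simp add: K mv_idm_f u)
  have "mv (minv k) (mv k u) = mv (mm (minv k) k) u" by (rule mv_mm_f[symmetric, OF K(2) K(1) u])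
  thus "mv (minv k) (mv k u) = u" by (simp add: K mv_idm_f u)
qed

lemma mv_Rng_elt:
  assumes k: "k \<in> GLinf" and g: "g \<in> GLinf" and v: "fsupp v"
  shows "mv k (\<lambda>i. mv g v i + v i) = (\<lambda>i. mv (cj k g) (mv k v) i + mv k v i)"
proof -
  have gv: "fsupp (mv g v)" by (rule finitary_vbnd_mv[OF GLinfD(1)[OF g] v])
  show ?thesis by (simp add: mv_add_f[OF GLinfD(1)[OF k] gv v] mv_cj[OF k g v])
qed

lemma Rng_conj:
  assumes k: "k \<in> GLinf" and g: "g \<in> GLinf"
  shows "Rng (cj k g) = mv k ` Rng g" "inj_on (mv k) (Rng g)"
proof -
  note K = GLinfD[OF k]
  show "inj_on (mv k) (Rng g)"
    by (rule inj_on_inverseI[where g="mv (minv k)"]) (simp add: mv_inv_cancel[OF k] Rng_fsupp[OF g])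
  show "Rng (cj k g) = mv k ` Rng g"
  proof
    show "mv k ` Rng g \<subseteq> Rng (cj k g)"
    proof
      fix w' assume "w' \<in> mv k ` Rng g"
      then obtain v where v: "fsupp v" "w' = mv k (\<lambda>i. mv g v i + v i)" by (auto simp: Rng_alt)
      have "w' = (\<lambda>i. mv (cj k g) (mv k v) i + mv k v i)" using v mv_Rng_elt[OF k g v(1)] by simp
      thus "w' \<in> Rng (cj k g)" unfolding Rng_alt using finitary_vbnd_mv[OF K(1) v(1)] by blast
    qed
  next
    show "Rng (cj k g) \<subseteq> mv k ` Rng g"
    proof
      fix w' assume "w' \<in> Rng (cj k g)"
      then obtain u where u: "fsupp u" "w' = (\<lambda>i. mv (cj k g) u i + u i)" by (auto simp: Rng_alt)
      define v where "v = mv (minv k) u"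
      have v: "fsupp v" unfolding v_def by (rule finitary_vbnd_mv[OF K(2) u(1)])
      have ku: "mv k v = u" unfolding v_def by (rule mv_inv_cancel(1)[OF k u(1)])
      have "w' = mv k (\<lambda>i. mv g v i + v i)" using mv_Rng_elt[OF k g v] u ku by simp
      moreover have "(\<lambda>i. mv g v i + v i) \<in> Rng g" unfolding Rng_alt using v by blast
      ultimately show "w' \<in> mv k ` Rng g" by blast
    qed
  qed
qed

lemma cR_cj: "k \<in> GLinf \<Longrightarrow> g \<in> GLinf \<Longrightarrow> cR (cj k g) = cR g"
  unfolding cR_def by (simp add: Rng_conj card_image)

lemma ufop_conj:
  assumes k: "k \<in> GLinf" and g: "g \<in> GLinf"
  shows "uop (matG k) \<circ> ufop g \<circ> uop (ginv (matG k)) = ufop (cj k g)"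
proof
  fix \<xi>
  show "(uop (matG k) \<circ> ufop g \<circ> uop (ginv (matG k))) \<xi> = ufop (cj k g) \<xi>"
  proof (cases "\<xi> \<in> l2")
    case False
    have "uop (ginv (matG k)) \<xi> = (\<lambda>_. 0)" using False by (rule uop_out)
    moreover have "ufop (cj k g) \<xi> = (\<lambda>_. 0)" using False ufop_bop[OF cj_GLinf[OF k g]] by (simp add: bop_out)
    ultimately show ?thesis using ufop_bop[OF g] uop_bop by (simp add: bop_zero)
  next
    case True
    define \<zeta> where "\<zeta> = uop (ginv (matG k)) \<xi>"
    have z: "\<zeta> = (\<lambda>h. \<xi> (gmul (matG k) h))" unfolding \<zeta>_def using True by (simp add: uop_l2 ginv_ginv)
    have zl: "\<zeta> \<in> l2" unfolding \<zeta>_def by (rule bop_l2[OF uop_bop True])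
    have fl: "ufop g \<zeta> \<in> l2" by (rule bop_l2[OF ufop_bop[OF g] zl])
    have "(uop (matG k) \<circ> ufop g \<circ> uop (ginv (matG k))) \<xi> = (\<lambda>h. ufop g \<zeta> (gmul (ginv (matG k)) h))"
      using fl by (simp add: \<zeta>_def[symmetric] uop_l2)
    also have "\<dots> = (\<lambda>h. \<Sum>v\<in>Rng g. cR g * \<xi> (gmul (matG k) (gmul (vecG v) (gmul (matG (minv g)) (gmul (ginv (matG k)) h)))))"
      using ufop_l2[OF g zl] by (simp add: z)
    also have "\<dots> = (\<lambda>h. \<Sum>v\<in>Rng g. cR g * \<xi> (gmul (vecG (mv k v)) (gmul (matG (minv (cj k g))) h)))"
    proof (intro ext sum.cong refl)
      fix h v assume v: "v \<in> Rng g"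
      have vf: "fsupp v" by (rule Rng_fsupp[OF g v])
      have "gmul (matG k) (gmul (vecG v) (gmul (matG (minv g)) (gmul (ginv (matG k)) h)))
          = gmul (vecG (mv k v)) (gmul (matG k) (gmul (ginv (matG g)) (gmul (ginv (matG k)) h)))"
        by (simp add: gmul_assoc[symmetric] mat_vec[OF k vf] ginv_mat[OF g])
      also have "\<dots> = gmul (vecG (mv k v)) (gmul (matG (minv (cj k g))) h)"
        by (simp add: ginv_matG_cj[OF k g] gmul_assoc)
      finally show "cR g * \<xi> (gmul (matG k) (gmul (vecG v) (gmul (matG (minv g)) (gmul (ginv (matG k)) h))))
          = cR g * \<xi> (gmul (vecG (mv k v)) (gmul (matG (minv (cj k g))) h))" by simp
    qed
    also have "\<dots> = (\<lambda>h. \<Sum>u\<in>Rng (cj k g). cR (cj k g) * \<xi> (gmul (vecG u) (gmul (matG (minv (cj k g))) h)))"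
    proof (rule ext)
      fix h
      have "(\<Sum>u\<in>Rng (cj k g). cR (cj k g) * \<xi> (gmul (vecG u) (gmul (matG (minv (cj k g))) h)))
          = (\<Sum>u\<in>mv k ` Rng g. cR g * \<xi> (gmul (vecG u) (gmul (matG (minv (cj k g))) h)))"
        by (simp add: Rng_conj[OF k g] cR_cj[OF k g])
      also have "\<dots> = (\<Sum>v\<in>Rng g. cR g * \<xi> (gmul (vecG (mv k v)) (gmul (matG (minv (cj k g))) h)))"
        by (rule sum.reindex_cong[OF Rng_conj(2)[OF k g] refl]) simp
      finally show "(\<Sum>v\<in>Rng g. cR g * \<xi> (gmul (vecG (mv k v)) (gmul (matG (minv (cj k g))) h)))
          = (\<Sum>u\<in>Rng (cj k g). cR (cj k g) * \<xi> (gmul (vecG u) (gmul (matG (minv (cj k g))) h)))" by simp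
    qed
    also have "\<dots> = ufop (cj k g) \<xi>" by (rule ufop_l2[OF cj_GLinf[OF k g] True, symmetric])
    finally show ?thesis .
  qed
qed


declare add_bit_eq_xor[simp del] mult_bit_eq_and[simp del]

section \<open>G-invariance\<close>

lemma S0_Mexo: "S0 \<subseteq> Mexo"
  unfolding Mexo_S0 by (rule vNgen_sub[OF S0_bop])

lemma LGV_S0: "LG Vsub \<subseteq> S0" by (simp add: S0_def)

lemma ufop_S0: "g \<in> GLinf \<Longrightarrow> ufop g \<in> S0"
  unfolding S0_def ufop_eq by blast

lemma Mexo_adj: "T \<in> Mexo \<Longrightarrow> adj T \<in> Mexo"
  using Mexo_vNa by (simp add: is_vNa_def)

lemma Mexo_bop: "T \<in> Mexo \<Longrightarrow> bop T"
  using Mexo_vNa by (auto simp: is_vNa_def)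

lemma vec_conj_Mexo:
  assumes w: "fsupp w" and T: "T \<in> Mexo"
  shows "uop (vecG w) \<circ> T \<circ> uop (ginv (vecG w)) = T"
proof -
  have "uop (vecG w) \<in> XV" using w by (auto simp: XV_def Vsub_def)
  hence c: "T \<circ> uop (vecG w) = uop (vecG w) \<circ> T" using commD[OF subsetD[OF Mexo_comm_XV T]] by blast
  have "uop (vecG w) \<circ> T \<circ> uop (ginv (vecG w)) = (T \<circ> uop (vecG w)) \<circ> uop (ginv (vecG w))" by (simp add: c)
  also have "\<dots> = T" by (rule uop_conj_Jop(2)[OF Mexo_bop[OF T]])
  finally show ?thesis .
qed

lemma adj_conj:
  assumes "bop B"
  shows "uop a \<circ> adj B \<circ> uop (ginv a) = adj (uop a \<circ> B \<circ> uop (ginv a))"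
  by (simp add: adj_comp bop_comp uop_bop assms adj_uop ginv_ginv comp_assoc)

lemma mat_conj_gen:
  assumes k: "k \<in> GLinf" and A: "A \<in> S0 \<union> adj ` S0"
  shows "uop (matG k) \<circ> A \<circ> uop (ginv (matG k)) \<in> Mexo"
proof -
  have base: "uop (matG k) \<circ> B \<circ> uop (ginv (matG k)) \<in> Mexo" if B: "B \<in> S0" for B
  proof (cases "B \<in> LG Vsub")
    case True
    thus ?thesis using LGV_conj[OF True] LGV_S0 S0_Mexo by blast
  next
    case False
    then obtain g where g: "g \<in> GLinf" "B = ufop g" using B unfolding S0_def ufop_eq by blast
    show ?thesis using ufop_conj[OF k g(1)] g ufop_S0[OF cj_GLinf[OF k g(1)]] S0_Mexo by auto
  qed
  show ?thesis
  proof (cases "A \<in> S0")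
    case True thus ?thesis by (rule base)
  next
    case False
    then obtain B where B: "B \<in> S0" "A = adj B" using A by blast
    have "uop (matG k) \<circ> A \<circ> uop (ginv (matG k)) = adj (uop (matG k) \<circ> B \<circ> uop (ginv (matG k)))"
      using B adj_conj S0_bop by blast
    thus ?thesis using Mexo_adj[OF base[OF B(1)]] by simp
  qed
qed

lemma mat_conj_Mexo:
  assumes k: "k \<in> GLinf" and T: "T \<in> Mexo"
  shows "uop (matG k) \<circ> T \<circ> uop (ginv (matG k)) \<in> Mexo"
  using T unfolding Mexo_S0
proof (rule conj_vNgen[OF S0_bop, rotated 2])
  show "uop (matG k) \<circ> A \<circ> uop (ginv (matG k)) \<in> vNgen S0" if "A \<in> S0 \<union> adj ` S0" for A
    using mat_conj_gen[OF k that] by (simp add: Mexo_S0)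
  show "uop (ginv (matG k)) \<circ> A \<circ> uop (matG k) \<in> vNgen S0" if "A \<in> S0 \<union> adj ` S0" for A
  proof -
    have k': "minv k \<in> GLinf" by (rule minv_GLinf[OF k])
    have "uop (matG (minv k)) \<circ> A \<circ> uop (ginv (matG (minv k))) \<in> Mexo" by (rule mat_conj_gen[OF k' that])
    thus ?thesis by (simp add: ginv_mat k k' minv_minv Mexo_S0)
  qed
qed

lemma Mexo_G_invariant: "G_invariant Mexo"
  unfolding G_invariant_def
proof (intro allI ballI)
  fix g T assume T: "T \<in> Mexo"
  define w where "w = gV g"
  define k where "k = gM g"
  have w: "fsupp w" and k: "k \<in> GLinf" by (simp_all add: w_def k_def gV_fsupp gM_GL)
  have g: "g = gmul (vecG w) (matG k)" unfolding w_def k_def by (rule grp_decomp)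
  define T' where "T' = uop (matG k) \<circ> T \<circ> uop (ginv (matG k))"
  have T': "T' \<in> Mexo" unfolding T'_def by (rule mat_conj_Mexo[OF k T])
  have "uop g \<circ> T \<circ> adj (uop g) = uop (vecG w) \<circ> T' \<circ> uop (ginv (vecG w))"
    by (simp only: adj_uop) (simp add: g ginv_mul uop_mul T'_def comp_assoc)
  also have "\<dots> = T'" by (rule vec_conj_Mexo[OF w T'])
  finally show "uop g \<circ> T \<circ> adj (uop g) \<in> Mexo" using T' by simp
qed


declare add_bit_eq_xor[simp del] mult_bit_eq_and[simp del]

section \<open>Elements commuting with V lie in V\<close>

lemma comm_V_in_V:
  assumes c: "\<And>w. fsupp w \<Longrightarrow> gmul n (vecG w) = gmul (vecG w) n"
  shows "n \<in> Vsub"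
proof -
  obtain b where b: "bnd b (gM n)" using gM_fin finitary_bnd by blast
  have mvw: "mv (gM n) w = w" if w: "fsupp w" for w
  proof -
    have "gV (gmul n (vecG w)) = gV (gmul (vecG w) n)" using c[OF w] by simp
    hence "(\<lambda>i. gV n i + mv (gM n) w i) = (\<lambda>i. w i + gV n i)"
      by (simp add: gV_mul gV_vec gM_vec w mv_idm_f gV_fsupp)
    hence "\<And>i. gV n i + mv (gM n) w i = w i + gV n i" by metis
    hence "\<And>i. mv (gM n) w i = w i" by (metis add.commute add_left_cancel)
    thus ?thesis by blast
  qed
  have "gM n = idm"
  proof (intro ext)
    fix i j
    have f: "fsupp (\<lambda>i. if i = j then (1::bit) else 0)" by (simp add: fsupp_def)
    have "gM n i j = mv (gM n) (\<lambda>i. if i = j then 1 else 0) i" by (rule mv_unit[OF b, symmetric])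
    also have "\<dots> = (if i = j then 1 else 0)" by (simp add: mvw[OF f])
    finally show "gM n i j = idm i j" by (simp add: idm_def)
  qed
  thus ?thesis by (simp add: Vsub_iff)
qed

lemma LG_N_sub_V:
  assumes e: "Mexo = LG N"
  shows "N \<subseteq> Vsub"
proof
  fix n assume n: "n \<in> N"
  have nM: "uop n \<in> comm XV" using uop_in_LG[OF n] e Mexo_comm_XV by blast
  show "n \<in> Vsub"
  proof (rule comm_V_in_V)
    fix w :: vec2 assume w: "fsupp w"
    have "uop (vecG w) \<in> XV" using w by (auto simp: XV_def Vsub_def)
    hence "uop n \<circ> uop (vecG w) = uop (vecG w) \<circ> uop n" using commD[OF nM] by blast
    hence "uop (gmul n (vecG w)) = uop (gmul (vecG w) n)" by (simp add: uop_mul)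
    thus "gmul n (vecG w) = gmul (vecG w) n" by (rule uop_inj)
  qed
qed

definition tsw :: "nat \<Rightarrow> nat" where "tsw i = (if i = 0 then 1 else if i = 1 then 0 else i)"

definition swm :: mat2 where "swm = (\<lambda>i j. idm (tsw i) j)"

lemma tsw_tsw: "tsw (tsw i) = i"
  by (simp add: tsw_def)

lemma mm_swm: "mm swm B = (\<lambda>i k. B (tsw i) k)"
proof (intro ext)
  fix i k
  have "{j. swm i j \<noteq> 0} = {tsw i}" by (auto simp: swm_def idm_def)
  thus "mm swm B i k = B (tsw i) k" by (simp add: mm_def swm_def idm_def)
qed

lemma swm_finitary: "finitary swm"
proof -
  have "{(i, j). swm i j \<noteq> idm i j} \<subseteq> {0, 1} \<times> {0, 1}"
    by (auto simp: swm_def idm_def tsw_def split: if_splits)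
  thus ?thesis unfolding finitary_def by (rule finite_subset) simp
qed

lemma swm_GLinf: "swm \<in> GLinf"
proof -
  have "mm swm swm = (\<lambda>i k. swm (tsw i) k)" by (rule mm_swm)
  also have "\<dots> = idm" by (simp add: fun_eq_iff swm_def tsw_tsw)
  finally have "mm swm swm = idm" .
  thus ?thesis unfolding GLinf_def using swm_finitary by blast
qed

lemma swm_ne: "swm \<noteq> idm"
proof
  assume "swm = idm"
  hence "swm 0 1 = idm 0 1" by simp
  thus False by (simp add: swm_def idm_def tsw_def)
qed

section \<open>The projection onto l2(V)\<close>

definition Pop :: oper where
  "Pop \<xi> = (if \<xi> \<in> l2 then (\<lambda>h. if h \<in> Vsub then \<xi> h else 0) else (\<lambda>_. 0))"

lemma nrm2_mono:
  assumes "\<eta> \<in> l2" "\<And>x. cmod (\<xi> x) \<le> cmod (\<eta> x)"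
  shows "nrm2 \<xi> \<le> nrm2 \<eta>"
proof -
  have l: "\<xi> \<in> l2" by (rule l2_mono[OF assms])
  show ?thesis unfolding nrm2_def
    by (rule infsum_mono) (use assms l in \<open>auto simp: l2_iff intro: power_mono\<close>)
qed

lemma Pop_bop: "bop Pop"
proof (rule bopI[where C=1])
  fix \<xi> assume x: "\<xi> \<in> l2"
  show "Pop \<xi> \<in> l2" using x by (simp add: Pop_def) (rule l2_mono[OF x], simp)
  have "nrm2 (Pop \<xi>) \<le> nrm2 \<xi>" using x by (simp add: Pop_def) (rule nrm2_mono[OF x], simp)
  thus "lnorm (Pop \<xi>) \<le> 1 * lnorm \<xi>" by (simp add: lnorm_nrm2)
next
  fix \<xi> \<eta> :: vect and a b :: complex assume x: "\<xi> \<in> l2" "\<eta> \<in> l2"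
  show "Pop (\<lambda>x. a * \<xi> x + b * \<eta> x) = (\<lambda>x. a * Pop \<xi> x + b * Pop \<eta> x)"
    using x by (simp add: Pop_def l2_lin fun_eq_iff)
next
  fix \<xi> :: vect assume "\<xi> \<notin> l2" thus "Pop \<xi> = (\<lambda>_. 0)" by (simp add: Pop_def)
qed

lemma Vsub_shift: "v \<in> Vsub \<Longrightarrow> (gmul (ginv v) h \<in> Vsub) = (h \<in> Vsub)"
  by (simp add: Vsub_iff gM_mul gM_inv minv_idm)

lemma Pop_comm: "Pop \<in> comm (XV \<union> adj ` XV)"
proof (rule commI[OF Pop_bop])
  fix A assume "A \<in> XV \<union> adj ` XV"
  hence "A \<in> XV" using adj_XV by auto
  then obtain v where v: "v \<in> Vsub" "A = uop v" by (auto simp: XV_def)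
  show "Pop \<circ> A = A \<circ> Pop"
  proof
    fix \<xi>
    show "(Pop \<circ> A) \<xi> = (A \<circ> Pop) \<xi>"
    proof (cases "\<xi> \<in> l2")
      case True
      have l1: "(\<lambda>h. \<xi> (gmul (ginv v) h)) \<in> l2" by (rule l2_shift[OF True])
      have l2': "(\<lambda>h. if h \<in> Vsub then \<xi> h else 0) \<in> l2" by (rule l2_mono[OF True]) simp
      have "(Pop \<circ> A) \<xi> = Pop (\<lambda>h. \<xi> (gmul (ginv v) h))" using True v(2) by (simp add: uop_l2)
      also have "\<dots> = (\<lambda>h. if h \<in> Vsub then \<xi> (gmul (ginv v) h) else 0)" using l1 by (simp add: Pop_def)
      also have "\<dots> = (\<lambda>h. if gmul (ginv v) h \<in> Vsub then \<xi> (gmul (ginv v) h) else 0)"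
        by (simp add: Vsub_shift[OF v(1)])
      also have "\<dots> = uop v (\<lambda>h. if h \<in> Vsub then \<xi> h else 0)" using l2' by (simp add: uop_l2)
      also have "\<dots> = (A \<circ> Pop) \<xi>" using True v(2) by (simp add: Pop_def)
      finally show ?thesis .
    next
      case False
      thus ?thesis using v by (simp add: Pop_def uop_def)
    qed
  qed
qed

lemma delta_one_l2: "delta gone \<in> l2" by simp

lemma Mexo_not_LG: "normal N Ggrp \<Longrightarrow> Mexo \<noteq> LG N"
proof
  assume e: "Mexo = LG N"
  have NV: "N \<subseteq> Vsub" by (rule LG_N_sub_V[OF e])
  have "LG N \<subseteq> LG Vsub" unfolding LG_def by (rule vNgen_mono) (use NV in auto)
  hence u: "ufop swm \<in> LG Vsub" using e S0_Mexo ufop_S0[OF swm_GLinf] by blast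
  have Pc: "Pop \<in> comm (XV \<union> adj ` XV)" by (rule Pop_comm)
  have c: "ufop swm \<circ> Pop = Pop \<circ> ufop swm"
    using u Pc unfolding LG_XV vNgen_def by (auto simp: comm_def)
  have "Pop (delta gone) = (\<lambda>h. if h \<in> Vsub then delta gone h else 0)" by (simp add: Pop_def)
  hence Pd: "Pop (delta gone) = delta gone" by (auto simp: delta_def gone_Vsub fun_eq_iff)
  define h where "h = matG swm"
  have hV: "h \<notin> Vsub" by (simp add: h_def Vsub_iff gM_mat swm_GLinf swm_ne)
  have "Pop (ufop swm (delta gone)) h = 0"
    using hV bop_l2[OF ufop_bop[OF swm_GLinf] delta_one_l2] by (simp add: Pop_def)
  moreover have "ufop swm (Pop (delta gone)) h \<noteq> 0"
  proof -
    have gh: "gmul (matG (minv swm)) h = gone"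
      by (simp add: h_def ginv_mat[OF swm_GLinf, symmetric] gmul_inv_left)
    have vz: "\<And>v. v \<in> Rng swm \<Longrightarrow> (gmul (vecG v) gone = gone) = (v = (\<lambda>_. 0))"
    proof -
      fix v assume v: "v \<in> Rng swm"
      have fv: "fsupp v" by (rule Rng_fsupp[OF swm_GLinf v])
      show "(gmul (vecG v) gone = gone) = (v = (\<lambda>_. 0))"
      proof
        assume "gmul (vecG v) gone = gone"
        hence "gV (vecG v) = gV gone" by (simp add: gmul_one_right)
        thus "v = (\<lambda>_. 0)" by (simp add: gV_vec fv gV_one)
      next
        assume "v = (\<lambda>_. 0)"
        thus "gmul (vecG v) gone = gone"
          by (intro grp_eqI) (simp_all add: gmul_one_right gM_vec gV_vec gM_one gV_one fsupp_zero)
      qed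
    qed
    have "ufop swm (delta gone) h = (\<Sum>v\<in>Rng swm. cR swm * delta gone (gmul (vecG v) gone))"
      by (simp add: ufop_l2[OF swm_GLinf delta_one_l2] gh)
    also have "\<dots> = (\<Sum>v\<in>Rng swm. if v = (\<lambda>_. 0) then cR swm else 0)"
      by (rule sum.cong) (simp_all add: delta_def vz)
    also have "\<dots> = cR swm" using Rng_finite[OF swm_GLinf] Rng_zero by simp
    also have "\<dots> \<noteq> 0"
    proof -
      have "card (Rng swm) \<noteq> 0" using Rng_finite[OF swm_GLinf] Rng_zero by (auto simp: card_eq_0_iff)
      thus ?thesis by (simp add: cR_def)
    qed
    finally show ?thesis using Pd by simp
  qed
  ultimately show False using c by (metis comp_apply)
qed

theorem lemma4p14:
  shows "is_vNa Mexo \<and> Mexo \<subseteq> LG UNIV \<and> G_invariant Mexo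
         \<and> (\<forall>N. normal N Ggrp \<longrightarrow> Mexo \<noteq> LG N)"
  using Mexo_vNa Mexo_LG Mexo_G_invariant Mexo_not_LG by blast


end
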